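(* Let $\mathbb{K}$ be a field, $S=\mathbb{K}[x_1,\ldots,x_n]$, and let $I\subseteq S$ be a support-$2$ monomial ideal whose irreducible decomposition is minimal. If $\alpha_{i,j}\geq 2$ for some $1\le i,j\le n$, then $I^{(2)}\neq I^2$.
   Context: For a monomial ideal $I$, $\mathcal{G}(I)$ denotes its minimal set of monomial generators. $I$ is a support-$2$ monomial ideal if $\mathcal{G}(I)\subseteq\{x_i^ax_j^b : 1\le i<j\le n,\ a,b\ge 1\}$. For $i\neq j$, $\alpha_{i,j}$ is the number of elements of $\mathcal{G}(I)$ whose support is exactly $\{x_i,x_j\}$. Symbolic power: $I^{(s)}=\bigcap_{P\in\mathrm{MinAss}(I)}(I^sS_P\cap S)$ over the minimal primes of $I$. Irreducible monomial ideals are those generated by pure powers of variables; every monomial ideal has a unique irredundant decomposition $I=\bigcap Q_i$ into irreducible monomial ideals, called minimal if $\sqrt{Q_i}\ne\sqrt{Q_j}$ for $i\neq j$. *)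

theory Defs
  imports Main "HOL-Library.Poly_Mapping"
begin

text \<open>Polynomial ring S = K[x_v : v in 'v] (with 'v a finite type, n = CARD('v)) is
  the type (v-indexed monomials to coefficients): finitely supported maps from exponent
  vectors (monomials) to coefficients, with convolution product.\<close>

type_synonym ('v, 'a) mpoly = "('v \<Rightarrow>\<^sub>0 nat) \<Rightarrow>\<^sub>0 'a"

definition is_ideal :: "'r::comm_ring_1 set \<Rightarrow> bool" where
  "is_ideal I \<longleftrightarrow> 0 \<in> I \<and> (\<forall>a\<in>I. \<forall>b\<in>I. a + b \<in> I) \<and> (\<forall>r. \<forall>a\<in>I. r * a \<in> I)"

definition ideal_gen :: "'r::comm_ring_1 set \<Rightarrow> 'r set" where
  "ideal_gen G = \<Inter>{J. is_ideal J \<and> G \<subseteq> J}"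

definition ideal_prod :: "'r::comm_ring_1 set \<Rightarrow> 'r set \<Rightarrow> 'r set" where
  "ideal_prod I J = ideal_gen {a * b | a b. a \<in> I \<and> b \<in> J}"

fun ideal_pow :: "'r::comm_ring_1 set \<Rightarrow> nat \<Rightarrow> 'r set" where
  "ideal_pow I 0 = UNIV"
| "ideal_pow I (Suc k) = ideal_prod I (ideal_pow I k)"

definition prime_ideal :: "'r::comm_ring_1 set \<Rightarrow> bool" where
  "prime_ideal P \<longleftrightarrow> is_ideal P \<and> P \<noteq> UNIV \<and> (\<forall>a b. a * b \<in> P \<longrightarrow> a \<in> P \<or> b \<in> P)"

definition radical :: "'r::comm_ring_1 set \<Rightarrow> 'r set" where
  "radical I = {f. \<exists>k. f ^ k \<in> I}"

definition min_primes :: "'r::comm_ring_1 set \<Rightarrow> 'r set set" where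
  "min_primes I = {P. prime_ideal P \<and> I \<subseteq> P \<and>
      (\<forall>Q. prime_ideal Q \<and> I \<subseteq> Q \<and> Q \<subseteq> P \<longrightarrow> Q = P)}"

text \<open>Contraction to S of the extension of I to the localization S_P at a prime P:
  I S_P \<inter> S = {f. \<exists>g \<notin> P. g f \<in> I}.\<close>
definition loc_contr :: "'r::comm_ring_1 set \<Rightarrow> 'r set \<Rightarrow> 'r set" where
  "loc_contr I P = {f. \<exists>g. g \<notin> P \<and> g * f \<in> I}"

definition symbolic_power :: "'r::comm_ring_1 set \<Rightarrow> nat \<Rightarrow> 'r set" where
  "symbolic_power I s = (\<Inter>P\<in>min_primes I. loc_contr (ideal_pow I s) P)"

definition mon :: "('v \<Rightarrow>\<^sub>0 nat) \<Rightarrow> ('v, 'a::field) mpoly" where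
  "mon m = Poly_Mapping.single m 1"

definition mdvd :: "('v \<Rightarrow>\<^sub>0 nat) \<Rightarrow> ('v \<Rightarrow>\<^sub>0 nat) \<Rightarrow> bool" where
  "mdvd m m' \<longleftrightarrow> (\<forall>i. Poly_Mapping.lookup m i \<le> Poly_Mapping.lookup m' i)"

definition monomial_ideal :: "('v, 'a::field) mpoly set \<Rightarrow> bool" where
  "monomial_ideal I \<longleftrightarrow> (\<exists>M. I = ideal_gen (mon ` M))"

definition min_gens :: "('v, 'a::field) mpoly set \<Rightarrow> ('v \<Rightarrow>\<^sub>0 nat) set" where
  "min_gens I = {m. (mon m :: ('v,'a) mpoly) \<in> I \<and>
      \<not> (\<exists>m'. (mon m' :: ('v,'a) mpoly) \<in> I \<and> mdvd m' m \<and> m' \<noteq> m)}"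

definition support2 :: "('v, 'a::field) mpoly set \<Rightarrow> bool" where
  "support2 I \<longleftrightarrow> monomial_ideal I \<and>
     (\<forall>m \<in> min_gens I. \<exists>i j. i \<noteq> j \<and> Poly_Mapping.keys m = {i, j})"

definition alpha :: "('v, 'a::field) mpoly set \<Rightarrow> 'v \<Rightarrow> 'v \<Rightarrow> nat" where
  "alpha I i j = card {m \<in> min_gens I. Poly_Mapping.keys m = {i, j}}"

definition irreducible_monomial_ideal :: "('v, 'a::field) mpoly set \<Rightarrow> bool" where
  "irreducible_monomial_ideal Q \<longleftrightarrow> (\<exists>A e. A \<noteq> {} \<and> (\<forall>i\<in>A. e i \<ge> (1::nat)) \<and>
      Q = ideal_gen ((\<lambda>i. mon (Poly_Mapping.single i (e i))) ` A))"

definition irred_decomp :: "('v, 'a::field) mpoly set \<Rightarrow> ('v, 'a) mpoly set set \<Rightarrow> bool" where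
  "irred_decomp I D \<longleftrightarrow> finite D \<and> (\<forall>Q\<in>D. irreducible_monomial_ideal Q) \<and>
      I = \<Inter>D \<and> (\<forall>Q\<in>D. \<Inter>(D - {Q}) \<noteq> I)"

text \<open>The (unique) irredundant irreducible decomposition of I is minimal:
  distinct components have distinct radicals.\<close>
definition minimal_irred_decomp :: "('v, 'a::field) mpoly set \<Rightarrow> bool" where
  "minimal_irred_decomp I \<longleftrightarrow> (\<forall>D. irred_decomp I D \<longrightarrow>
      (\<forall>Q1\<in>D. \<forall>Q2\<in>D. Q1 \<noteq> Q2 \<longrightarrow> radical Q1 \<noteq> radical Q2))"

end

theory Submission imports Defs "HOL-Library.FuncSet" begin

lemma is_ideal_ideal_gen: "is_ideal (ideal_gen G)"
  unfolding ideal_gen_def is_ideal_def by auto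

lemma ideal_gen_sub: "G \<subseteq> ideal_gen G"
  unfolding ideal_gen_def by auto

lemma ideal_gen_least: "is_ideal J \<Longrightarrow> G \<subseteq> J \<Longrightarrow> ideal_gen G \<subseteq> J"
  unfolding ideal_gen_def by auto

lemma ideal_sum: assumes "is_ideal I" "finite A" "\<And>x. x \<in> A \<Longrightarrow> f x \<in> I" shows "sum f A \<in> I"
  using assms(2,3) by (induction A rule: finite_induct) (use assms(1) in \<open>auto simp: is_ideal_def\<close>)

lemma ideal_multL: "is_ideal I \<Longrightarrow> a \<in> I \<Longrightarrow> r * a \<in> I"
  by (auto simp: is_ideal_def)

lemma ideal_multR: "is_ideal I \<Longrightarrow> a \<in> I \<Longrightarrow> a * r \<in> I"
  by (metis ideal_multL mult.commute)
definition mset :: "('v \<Rightarrow>\<^sub>0 nat) set \<Rightarrow> ('v, 'a::field) mpoly set" where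
  "mset M = {p. \<forall>t\<in>Poly_Mapping.keys p. \<exists>m\<in>M. mdvd m t}"

lemma keys_mon[simp]: "Poly_Mapping.keys (mon t :: ('v,'a::field) mpoly) = {t}"
  by (simp add: mon_def)

lemma mon_add: "(mon (s + t) :: ('v,'a::field) mpoly) = mon s * mon t"
  by (simp add: mon_def mult_single)

lemma mdvd_trans: "mdvd a b \<Longrightarrow> mdvd b c \<Longrightarrow> mdvd a c"
  unfolding mdvd_def using le_trans by blast

lemma mdvd_add: "mdvd a b \<Longrightarrow> mdvd a (s + b)"
  unfolding mdvd_def by (simp add: lookup_add add.commute trans_le_add1)

lemma is_ideal_mset: "is_ideal (mset M :: ('v,'a::field) mpoly set)"
proof -
  have mul: "r * a \<in> mset M" if "a \<in> mset M" for r a :: "('v,'a) mpoly"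
  proof -
    have "\<exists>m\<in>M. mdvd m t" if t: "t \<in> Poly_Mapping.keys (r * a)" for t
    proof -
      from t keys_mult[of r a] obtain s q where "t = s + q" "q \<in> Poly_Mapping.keys a" by blast
      with \<open>a \<in> mset M\<close> show ?thesis unfolding mset_def by (auto intro: mdvd_add)
    qed
    then show ?thesis unfolding mset_def by blast
  qed
  have add: "a + b \<in> mset M" if "a \<in> mset M" "b \<in> mset M" for a b :: "('v,'a) mpoly"
  proof -
    have "Poly_Mapping.keys (a + b) \<subseteq> Poly_Mapping.keys a \<union> Poly_Mapping.keys b" by (rule keys_add)
    then show ?thesis using that unfolding mset_def by blast
  qed
  have z: "0 \<in> mset M" unfolding mset_def by simp
  show ?thesis unfolding is_ideal_def using mul add z by blast
qed

lemma mon_in_mset: "m \<in> M \<Longrightarrow> (mon m :: ('v,'a::field) mpoly) \<in> mset M"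
  unfolding mset_def mdvd_def by auto

lemma poly_expand: "(p :: ('v,'a::field) mpoly) = (\<Sum>t\<in>Poly_Mapping.keys p. Poly_Mapping.single t (Poly_Mapping.lookup p t))"
proof (rule poly_mapping_eqI)
  fix k
  show "Poly_Mapping.lookup p k = Poly_Mapping.lookup (\<Sum>t\<in>Poly_Mapping.keys p. Poly_Mapping.single t (Poly_Mapping.lookup p t)) k"
    by (simp add: lookup_sum lookup_single when_def sum.delta' in_keys_iff)
qed

lemma mdvd_diff_add: "mdvd m t \<Longrightarrow> (t - m) + m = t"
  unfolding mdvd_def by (intro poly_mapping_eqI) (simp add: lookup_add lookup_minus)

lemma ideal_gen_mon: "ideal_gen (mon ` M) = (mset M :: ('v,'a::field) mpoly set)"
proof
  show "ideal_gen (mon ` M) \<subseteq> (mset M :: ('v,'a) mpoly set)"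
    by (rule ideal_gen_least[OF is_ideal_mset]) (auto intro: mon_in_mset)
next
  show "(mset M :: ('v,'a) mpoly set) \<subseteq> ideal_gen (mon ` M)"
  proof
    fix p :: "('v,'a) mpoly" assume p: "p \<in> mset M"
    have "Poly_Mapping.single t (Poly_Mapping.lookup p t) \<in> ideal_gen (mon ` M)" if "t \<in> Poly_Mapping.keys p" for t
    proof -
      from p that obtain m where m: "m \<in> M" "mdvd m t" unfolding mset_def by auto
      have "Poly_Mapping.single t (Poly_Mapping.lookup p t) = Poly_Mapping.single (t - m) (Poly_Mapping.lookup p t) * mon m"
        by (simp add: mon_def mult_single mdvd_diff_add[OF m(2)])
      moreover have "mon m \<in> ideal_gen (mon ` M)" using m ideal_gen_sub by blast
      ultimately show ?thesis using ideal_multL[OF is_ideal_ideal_gen] by metis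
    qed
    then have "(\<Sum>t\<in>Poly_Mapping.keys p. Poly_Mapping.single t (Poly_Mapping.lookup p t)) \<in> ideal_gen (mon ` M)"
      by (intro ideal_sum[OF is_ideal_ideal_gen]) auto
    then show "p \<in> ideal_gen (mon ` M)" using poly_expand[of p] by simp
  qed
qed

lemma mon_mset: "((mon t :: ('v,'a::field) mpoly) \<in> mset M) = (\<exists>m\<in>M. mdvd m t)"
  unfolding mset_def by simp



lemma monomial_ideal_mset: "monomial_ideal (I :: ('v,'a::field) mpoly set) \<Longrightarrow> \<exists>M. I = mset M"
  unfolding monomial_ideal_def using ideal_gen_mon by metis

lemma mono_char: assumes "monomial_ideal (I :: ('v,'a::field) mpoly set)"
  shows "p \<in> I \<longleftrightarrow> (\<forall>t\<in>Poly_Mapping.keys p. mon t \<in> I)"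
proof -
  obtain M where I: "I = mset M" using monomial_ideal_mset[OF assms] by blast
  show ?thesis unfolding I mon_mset unfolding mset_def by simp
qed

lemma mono_dvd: assumes "monomial_ideal (I :: ('v,'a::field) mpoly set)" "mon s \<in> I" "mdvd s t"
  shows "mon t \<in> I"
proof -
  obtain M where I: "I = mset M" using monomial_ideal_mset[OF assms(1)] by blast
  show ?thesis using assms(2,3) unfolding I mon_mset by (blast intro: mdvd_trans)
qed

definition deg :: "('v::finite \<Rightarrow>\<^sub>0 nat) \<Rightarrow> nat" where
  "deg t = (\<Sum>k\<in>UNIV. Poly_Mapping.lookup t k)"

lemma mdvd_deg: assumes "mdvd a b" "a \<noteq> b" shows "deg a < deg b"
proof -
  obtain k where "Poly_Mapping.lookup a k \<noteq> Poly_Mapping.lookup b k"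
    using assms(2) by (meson poly_mapping_eqI)
  then have k: "Poly_Mapping.lookup a k < Poly_Mapping.lookup b k" using assms(1) unfolding mdvd_def
    using le_neq_implies_less by blast
  have le: "\<forall>x\<in>UNIV. Poly_Mapping.lookup a x \<le> Poly_Mapping.lookup b x" using assms(1) unfolding mdvd_def by blast
  have "(\<Sum>x\<in>UNIV. Poly_Mapping.lookup a x) < (\<Sum>x\<in>UNIV. Poly_Mapping.lookup b x)"
    by (rule sum_strict_mono_ex1[OF finite_UNIV le]) (use k in blast)
  then show ?thesis unfolding deg_def .
qed

lemma mdvd_refl[simp]: "mdvd a a" unfolding mdvd_def by simp

lemma mdvd_antisym: "mdvd a b \<Longrightarrow> mdvd b a \<Longrightarrow> a = b"
  unfolding mdvd_def by (meson order_antisym poly_mapping_eqI)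

lemma exists_min_gen: assumes "monomial_ideal (I :: ('v::finite,'a::field) mpoly set)" "mon t \<in> I"
  shows "\<exists>g\<in>min_gens I. mdvd g t"
proof -
  obtain m where m: "mon m \<in> I \<and> mdvd m t" and least: "\<forall>y. (mon y \<in> I \<and> mdvd y t) \<longrightarrow> deg m \<le> deg y"
    using ex_has_least_nat[of "\<lambda>m. mon m \<in> I \<and> mdvd m t" t deg] assms(2) by auto
  have "m \<in> min_gens I"
  proof -
    have "\<not> (\<exists>m'. (mon m' :: ('v,'a) mpoly) \<in> I \<and> mdvd m' m \<and> m' \<noteq> m)"
    proof
      assume "\<exists>m'. (mon m' :: ('v,'a) mpoly) \<in> I \<and> mdvd m' m \<and> m' \<noteq> m"
      then obtain m' where m': "(mon m' :: ('v,'a) mpoly) \<in> I" "mdvd m' m" "m' \<noteq> m" by blast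
      have "deg m' < deg m" using mdvd_deg m' by blast
      moreover have "deg m \<le> deg m'" using least m' m mdvd_trans by blast
      ultimately show False by simp
    qed
    then show ?thesis unfolding min_gens_def using m by blast
  qed
  then show ?thesis using m by blast
qed

lemma min_gen_in: "g \<in> min_gens I \<Longrightarrow> (mon g :: ('v,'a::field) mpoly) \<in> I"
  unfolding min_gens_def by blast

lemma min_gens_antichain: "g \<in> min_gens (I :: ('v,'a::field) mpoly set) \<Longrightarrow> g' \<in> min_gens I \<Longrightarrow> mdvd g g' \<Longrightarrow> g = g'"
  unfolding min_gens_def by blast

lemma mon_in_iff_min_gen: assumes "monomial_ideal (I :: ('v::finite,'a::field) mpoly set)"
  shows "mon t \<in> I \<longleftrightarrow> (\<exists>g\<in>min_gens I. mdvd g t)"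
  using exists_min_gen[OF assms] mono_dvd[OF assms] min_gen_in by blast



lemma monomial_ideal_is_ideal: "monomial_ideal I \<Longrightarrow> is_ideal I"
  unfolding monomial_ideal_def using is_ideal_ideal_gen by metis

lemma support2_keys: "support2 I \<Longrightarrow> g \<in> min_gens I \<Longrightarrow> \<exists>x y. x \<noteq> y \<and> Poly_Mapping.keys g = {x, y}"
  unfolding support2_def by blast

lemma lookup_notin_keys: "k \<notin> Poly_Mapping.keys g \<Longrightarrow> Poly_Mapping.lookup g k = 0"
  by (simp add: in_keys_iff)

lemma pair_le_eq:
  assumes "g \<in> min_gens (I :: ('v,'a::field) mpoly set)" "g' \<in> min_gens I"
    "Poly_Mapping.keys g = {x, y}"
    "Poly_Mapping.lookup g x \<le> Poly_Mapping.lookup g' x" "Poly_Mapping.lookup g y \<le> Poly_Mapping.lookup g' y"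
  shows "g = g'"
proof -
  have "mdvd g g'" unfolding mdvd_def
  proof
    fix k show "Poly_Mapping.lookup g k \<le> Poly_Mapping.lookup g' k"
      using assms(3-5) lookup_notin_keys[of k g] by (cases "k = x \<or> k = y") auto
  qed
  then show ?thesis using min_gens_antichain assms(1,2) by blast
qed

lemma pair_finite:
  fixes I :: "('v,'a::field) mpoly set"
  shows "finite {g \<in> min_gens I. Poly_Mapping.keys g = {x, y}}" (is "finite ?S")
proof (cases "?S = {}")
  case True then show ?thesis by (metis finite.emptyI)
next
  case False
  then obtain g0 where g0: "g0 \<in> ?S" by blast
  let ?S1 = "{g \<in> ?S. Poly_Mapping.lookup g x < Poly_Mapping.lookup g0 x}"
  let ?S2 = "{g \<in> ?S. Poly_Mapping.lookup g y < Poly_Mapping.lookup g0 y}"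
  have sub: "?S \<subseteq> {g0} \<union> ?S1 \<union> ?S2"
  proof
    fix g assume g: "g \<in> ?S"
    show "g \<in> {g0} \<union> ?S1 \<union> ?S2"
    proof (cases "Poly_Mapping.lookup g0 x \<le> Poly_Mapping.lookup g x \<and> Poly_Mapping.lookup g0 y \<le> Poly_Mapping.lookup g y")
      case True
      then have "g0 = g" using pair_le_eq[of g0 I g x y] g g0 by blast
      then show ?thesis by simp
    next
      case False then show ?thesis using g by auto
    qed
  qed
  have f1: "finite ?S1"
  proof -
    have "inj_on (\<lambda>g. Poly_Mapping.lookup g x) ?S1"
    proof (rule inj_onI)
      fix g g' assume g: "g \<in> ?S1" and g': "g' \<in> ?S1" and eq: "Poly_Mapping.lookup g x = Poly_Mapping.lookup g' x"
      show "g = g'"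
      proof (cases "Poly_Mapping.lookup g y \<le> Poly_Mapping.lookup g' y")
        case True
        have "g \<in> min_gens I" "g' \<in> min_gens I" "Poly_Mapping.keys g = {x, y}" using g g' by simp_all
        then show ?thesis using True eq pair_le_eq[of g I g' x y] by simp
      next
        case False
        have "g \<in> min_gens I" "g' \<in> min_gens I" "Poly_Mapping.keys g' = {x, y}" using g g' by simp_all
        then show ?thesis using False eq pair_le_eq[of g' I g x y] by simp
      qed
    qed
    moreover have "finite ((\<lambda>g. Poly_Mapping.lookup g x) ` ?S1)"
      by (rule finite_subset[of _ "{..< Poly_Mapping.lookup g0 x}"]) auto
    ultimately show ?thesis by (intro finite_imageD[of "\<lambda>g. Poly_Mapping.lookup g _"])
  qed
  have f2: "finite ?S2"
  proof -
    have "inj_on (\<lambda>g. Poly_Mapping.lookup g y) ?S2"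
    proof (rule inj_onI)
      fix g g' assume g: "g \<in> ?S2" and g': "g' \<in> ?S2" and eq: "Poly_Mapping.lookup g y = Poly_Mapping.lookup g' y"
      show "g = g'"
      proof (cases "Poly_Mapping.lookup g x \<le> Poly_Mapping.lookup g' x")
        case True
        have "g \<in> min_gens I" "g' \<in> min_gens I" "Poly_Mapping.keys g = {x, y}" using g g' by simp_all
        then show ?thesis using True eq pair_le_eq[of g I g' x y] by simp
      next
        case False
        have "g \<in> min_gens I" "g' \<in> min_gens I" "Poly_Mapping.keys g' = {x, y}" using g g' by simp_all
        then show ?thesis using False eq pair_le_eq[of g' I g x y] by simp
      qed
    qed
    moreover have "finite ((\<lambda>g. Poly_Mapping.lookup g y) ` ?S2)"
      by (rule finite_subset[of _ "{..< Poly_Mapping.lookup g0 y}"]) auto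
    ultimately show ?thesis by (intro finite_imageD[of "\<lambda>g. Poly_Mapping.lookup g _"])
  qed
  show ?thesis by (rule finite_subset[OF sub]) (use f1 f2 in simp)
qed

lemma min_gens_finite:
  fixes I :: "('v::finite,'a::field) mpoly set"
  assumes "support2 I" shows "finite (min_gens I)"
proof -
  have "min_gens I \<subseteq> (\<Union>xy\<in>UNIV. {g \<in> min_gens I. Poly_Mapping.keys g = {fst xy, snd xy}})"
    using support2_keys[OF assms] by fastforce
  moreover have "finite (\<Union>xy\<in>(UNIV::('v\<times>'v) set). {g \<in> min_gens I. Poly_Mapping.keys g = {fst xy, snd xy}})"
    by (rule finite_UN_I) (simp_all add: pair_finite)
  ultimately show ?thesis by (rule finite_subset)
qed

lemma ideal_prod_mem: assumes "a \<in> I" "b \<in> J" shows "a * b \<in> ideal_prod I J"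
proof -
  have "a * b \<in> {a * b |a b. a \<in> I \<and> b \<in> J}" using assms by blast
  then show ?thesis unfolding ideal_prod_def using ideal_gen_sub[of "{a * b |a b. a \<in> I \<and> b \<in> J}"] by (rule subsetD[rotated])
qed

lemma ideal_prod_UNIV: assumes "is_ideal I" shows "ideal_prod I UNIV = I"
proof
  show "ideal_prod I UNIV \<subseteq> I" unfolding ideal_prod_def
  proof (rule ideal_gen_least[OF assms], rule)
    fix c assume "c \<in> {a * b |a b. a \<in> I \<and> b \<in> UNIV}"
    then obtain a b where "c = a * b" "a \<in> I" by blast
    then show "c \<in> I" using ideal_multR[OF assms] by blast
  qed
  show "I \<subseteq> ideal_prod I UNIV"
  proof
    fix a assume "a \<in> I" then have "a * 1 \<in> ideal_prod I UNIV" by (intro ideal_prod_mem) auto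
    then show "a \<in> ideal_prod I UNIV" by simp
  qed
qed

lemma ideal_pow2: "is_ideal I \<Longrightarrow> ideal_pow I 2 = ideal_prod I I"
  by (simp add: numeral_2_eq_2 ideal_prod_UNIV)

definition M2 :: "('v, 'a::field) mpoly set \<Rightarrow> ('v \<Rightarrow>\<^sub>0 nat) set" where
  "M2 I = {g1 + g2 | g1 g2. g1 \<in> min_gens I \<and> g2 \<in> min_gens I}"

lemma I2_sub: assumes "monomial_ideal (I :: ('v::finite,'a::field) mpoly set)"
  shows "ideal_prod I I \<subseteq> mset (M2 I)"
  unfolding ideal_prod_def
proof (rule ideal_gen_least[OF is_ideal_mset], rule)
  fix c assume "c \<in> {a * b |a b. a \<in> I \<and> b \<in> I}"
  then obtain a b where c: "c = a * b" "a \<in> I" "b \<in> I" by blast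
  have "\<exists>m\<in>M2 I. mdvd m t" if t: "t \<in> Poly_Mapping.keys c" for t
  proof -
    from t c keys_mult[of a b] obtain s q where sq: "t = s + q" "s \<in> Poly_Mapping.keys a" "q \<in> Poly_Mapping.keys b" by blast
    have "mon s \<in> I" "mon q \<in> I" using mono_char[OF assms] sq c by blast+
    then obtain g1 g2 where "g1 \<in> min_gens I" "mdvd g1 s" "g2 \<in> min_gens I" "mdvd g2 q"
      using exists_min_gen[OF assms] by metis
    then have "g1 + g2 \<in> M2 I" "mdvd (g1 + g2) t" unfolding M2_def mdvd_def sq(1)
      by (auto simp: lookup_add add_mono)
    then show ?thesis by blast
  qed
  then show "c \<in> mset (M2 I)" unfolding mset_def by blast
qed

lemma mon_in_I2: assumes "monomial_ideal (I :: ('v,'a::field) mpoly set)" "mon g1 \<in> I" "mon g2 \<in> I" "mdvd (g1 + g2) w"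
  shows "mon w \<in> ideal_prod I I"
proof -
  have "mon g1 * mon g2 \<in> ideal_prod I I" using assms(2,3) by (rule ideal_prod_mem)
  then have "mon (w - (g1 + g2)) * (mon g1 * mon g2) \<in> ideal_prod I I"
    unfolding ideal_prod_def by (rule ideal_multL[OF is_ideal_ideal_gen])
  moreover have "mon (w - (g1 + g2)) * (mon g1 * mon g2) = (mon (w - (g1 + g2) + (g1 + g2)) :: ('v,'a) mpoly)"
    by (simp add: mon_add)
  moreover have "w - (g1 + g2) + (g1 + g2) = w" by (rule mdvd_diff_add[OF assms(4)])
  ultimately show ?thesis by simp
qed


definition X :: "'v \<Rightarrow> ('v, 'a::field) mpoly" where
  "X k = mon (Poly_Mapping.single k 1)"

lemma mon_zero: "(mon 0 :: ('v,'a::field) mpoly) = 1"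
  by (simp add: mon_def)

lemma prime_not_one: assumes "prime_ideal P" shows "(1 :: 'r::comm_ring_1) \<notin> P"
proof
  assume "1 \<in> P"
  then have "r \<in> P" for r using ideal_multL[of P 1 r] assms unfolding prime_ideal_def by simp
  then have "P = UNIV" by auto
  then show False using assms unfolding prime_ideal_def by simp
qed

lemma prime_mon:
  fixes P :: "('v::finite,'a::field) mpoly set"
  assumes P: "prime_ideal P"
  shows "mon t \<in> P \<Longrightarrow> \<exists>k. 0 < Poly_Mapping.lookup t k \<and> X k \<in> P"
proof (induction "deg t" arbitrary: t rule: less_induct)
  case less
  show ?case
  proof (cases "t = 0")
    case True
    have "mon t = (1 :: ('v,'a) mpoly)" using True mon_zero by simp
    then show ?thesis using less.prems prime_not_one[OF P] by simp
  next
    case False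
    then have "Poly_Mapping.keys t \<noteq> {}" by simp
    then obtain k where "k \<in> Poly_Mapping.keys t" by blast
    then have k: "Poly_Mapping.lookup t k \<noteq> 0" by (simp add: in_keys_iff)
    define t' where "t' = t - Poly_Mapping.single k 1"
    have tt: "t = Poly_Mapping.single k 1 + t'"
      unfolding t'_def using k by (intro poly_mapping_eqI) (auto simp: lookup_add lookup_minus lookup_single when_def)
    have "mon t = X k * (mon t' :: ('v,'a) mpoly)" unfolding X_def by (subst tt) (simp add: mon_add)
    then have "X k * mon t' \<in> P" using less.prems by simp
    then have "X k \<in> P \<or> mon t' \<in> P" using P unfolding prime_ideal_def by blast
    then show ?thesis
    proof
      assume "X k \<in> P" then show ?thesis using k by auto
    next
      assume t'P: "mon t' \<in> P"
      have d: "mdvd t' t" unfolding mdvd_def by (subst tt) (simp add: lookup_add)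
      have "t' \<noteq> t"
      proof
        assume "t' = t"
        then have "Poly_Mapping.lookup t k = 1 + Poly_Mapping.lookup t k"
          using arg_cong[OF tt, of "\<lambda>s. Poly_Mapping.lookup s k"] by (simp add: lookup_add)
        then show False by simp
      qed
      then have "deg t' < deg t" using mdvd_deg d by blast
      then obtain k' where "0 < Poly_Mapping.lookup t' k'" "X k' \<in> P" using less.hyps t'P by blast
      moreover have "Poly_Mapping.lookup t' k' \<le> Poly_Mapping.lookup t k'" using d unfolding mdvd_def by blast
      ultimately show ?thesis by (metis order.strict_trans2)
    qed
  qed
qed

definition PV :: "'v set \<Rightarrow> ('v, 'a::field) mpoly set" where
  "PV V = {p. \<forall>t\<in>Poly_Mapping.keys p. \<exists>k\<in>V. 0 < Poly_Mapping.lookup t k}"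

lemma PV_mem: "p \<in> PV V \<longleftrightarrow> (\<forall>t\<in>Poly_Mapping.keys p. \<exists>k\<in>V. 0 < Poly_Mapping.lookup t k)"
  unfolding PV_def by simp

lemma PV_mon: "(mon t :: ('v,'a::field) mpoly) \<in> PV V \<longleftrightarrow> (\<exists>k\<in>V. 0 < Poly_Mapping.lookup t k)"
  by (simp add: PV_mem)

lemma X_in_PV: "(X k :: ('v,'a::field) mpoly) \<in> PV V \<longleftrightarrow> k \<in> V"
  unfolding X_def PV_mon by (auto simp: lookup_single when_def)

lemma is_ideal_PV: "is_ideal (PV V :: ('v,'a::field) mpoly set)"
proof -
  have mul: "r * a \<in> PV V" if "a \<in> PV V" for r a :: "('v,'a) mpoly"
  proof -
    have "\<exists>k\<in>V. 0 < Poly_Mapping.lookup t k" if t: "t \<in> Poly_Mapping.keys (r * a)" for t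
    proof -
      from t keys_mult[of r a] obtain s q where sq: "t = s + q" "q \<in> Poly_Mapping.keys a" by blast
      with \<open>a \<in> PV V\<close> obtain k where "k \<in> V" "0 < Poly_Mapping.lookup q k" unfolding PV_def by blast
      then show ?thesis unfolding sq(1) by (auto simp: lookup_add)
    qed
    then show ?thesis unfolding PV_def by blast
  qed
  have add: "a + b \<in> PV V" if "a \<in> PV V" "b \<in> PV V" for a b :: "('v,'a) mpoly"
  proof -
    have "Poly_Mapping.keys (a + b) \<subseteq> Poly_Mapping.keys a \<union> Poly_Mapping.keys b" by (rule keys_add)
    then show ?thesis using that unfolding PV_def by blast
  qed
  have z: "0 \<in> PV V" unfolding PV_def by simp
  show ?thesis unfolding is_ideal_def using mul add z by blast
qed


lemma lookup_mult_unique: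
  fixes a b :: "('v,'a::field) mpoly"
  assumes s0: "s0 \<in> Poly_Mapping.keys a" and t0: "t0 \<in> Poly_Mapping.keys b"
    and uniq: "\<And>l q. l \<in> Poly_Mapping.keys a \<Longrightarrow> q \<in> Poly_Mapping.keys b \<Longrightarrow> l + q = s0 + t0 \<Longrightarrow> l = s0 \<and> q = t0"
  shows "Poly_Mapping.lookup (a * b) (s0 + t0) = Poly_Mapping.lookup a s0 * Poly_Mapping.lookup b t0"
proof -
  let ?k = "s0 + t0"
  have inner: "(\<Sum>q. Poly_Mapping.lookup b q when ?k = l + q) = (Poly_Mapping.lookup b t0 when l = s0)"
    if l: "l \<in> Poly_Mapping.keys a" for l
  proof -
    have "(Poly_Mapping.lookup b q when ?k = l + q) = ((Poly_Mapping.lookup b t0 when l = s0) when q = t0)" for q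
    proof (cases "q \<in> Poly_Mapping.keys b")
      case True
      show ?thesis
      proof (cases "?k = l + q")
        case True
        then have "l = s0 \<and> q = t0" using uniq l \<open>q \<in> Poly_Mapping.keys b\<close> by simp
        then show ?thesis by (simp add: when_def)
      next
        case False
        then have "\<not> (l = s0 \<and> q = t0)" by auto
        then show ?thesis using False by (auto simp: when_def)
      qed
    next
      case False
      then have "Poly_Mapping.lookup b q = 0" by (simp add: in_keys_iff)
      moreover have "\<not> (l = s0 \<and> q = t0)" using False t0 by auto
      ultimately show ?thesis by (auto simp: when_def)
    qed
    then have "(\<Sum>q. Poly_Mapping.lookup b q when ?k = l + q) = (\<Sum>q. (Poly_Mapping.lookup b t0 when l = s0) when q = t0)"
      by presburger
    also have "\<dots> = (Poly_Mapping.lookup b t0 when l = s0)" by simp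
    finally show ?thesis .
  qed
  have outer: "Poly_Mapping.lookup a l * (\<Sum>q. Poly_Mapping.lookup b q when ?k = l + q) =
      (Poly_Mapping.lookup a s0 * Poly_Mapping.lookup b t0 when l = s0)" for l
  proof (cases "l \<in> Poly_Mapping.keys a")
    case True
    then show ?thesis using inner by (auto simp: when_def)
  next
    case False
    then have "Poly_Mapping.lookup a l = 0" by (simp add: in_keys_iff)
    moreover have "l \<noteq> s0" using False s0 by auto
    ultimately show ?thesis by (simp add: when_def)
  qed
  have "Poly_Mapping.lookup (a * b) ?k = (\<Sum>l. Poly_Mapping.lookup a l * (\<Sum>q. Poly_Mapping.lookup b q when ?k = l + q))"
    by (rule lookup_mult)
  also have "\<dots> = (\<Sum>l. Poly_Mapping.lookup a s0 * Poly_Mapping.lookup b t0 when l = s0)"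
    using outer by presburger
  also have "\<dots> = Poly_Mapping.lookup a s0 * Poly_Mapping.lookup b t0" by simp
  finally show ?thesis .
qed

lemma exists_emb:
  "\<exists>emb :: ('v::finite \<Rightarrow>\<^sub>0 nat) \<Rightarrow> (nat \<Rightarrow>\<^sub>0 nat). inj emb \<and> (\<forall>s t. emb (s + t) = emb s + emb t)"
proof -
  obtain h :: "'v \<Rightarrow> nat" and n where "h ` UNIV = {i. i < n}" "inj_on h UNIV"
    using finite_imp_inj_to_nat_seg[OF finite_UNIV] by blast
  then have inj: "inj h" by simp
  define emb where "emb t = (\<Sum>k\<in>UNIV. Poly_Mapping.single (h k) (Poly_Mapping.lookup t k))" for t :: "'v \<Rightarrow>\<^sub>0 nat"
  have add: "emb (s + t) = emb s + emb t" for s t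
    unfolding emb_def by (simp add: lookup_add single_add sum.distrib)
  have lk: "Poly_Mapping.lookup (emb t) (h k) = Poly_Mapping.lookup t k" for t k
  proof -
    have "Poly_Mapping.lookup (emb t) (h k) = (\<Sum>k'\<in>UNIV. (Poly_Mapping.lookup t k' when h k' = h k))"
      unfolding emb_def by (simp add: lookup_sum lookup_single)
    also have "\<dots> = (\<Sum>k'\<in>UNIV. (if k' = k then Poly_Mapping.lookup t k' else 0))"
      using inj by (intro sum.cong) (auto simp: when_def inj_eq)
    also have "\<dots> = Poly_Mapping.lookup t k" by simp
    finally show ?thesis .
  qed
  have "inj emb"
  proof (rule injI)
    fix s t assume "emb s = emb t"
    then have "Poly_Mapping.lookup s k = Poly_Mapping.lookup t k" for k using lk by metis
    then show "s = t" by (intro poly_mapping_eqI)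
  qed
  then show ?thesis using add by blast
qed

lemma PV_prime: "prime_ideal (PV V :: ('v::finite,'a::field) mpoly set)"
proof -
  obtain emb :: "('v \<Rightarrow>\<^sub>0 nat) \<Rightarrow> (nat \<Rightarrow>\<^sub>0 nat)" where inj: "inj emb" and add: "\<And>s t. emb (s + t) = emb s + emb t"
    using exists_emb by blast
  have one: "(1 :: ('v,'a) mpoly) \<notin> PV V"
  proof -
    have "(mon 0 :: ('v,'a) mpoly) \<notin> PV V" unfolding PV_mon by simp
    then show ?thesis unfolding mon_zero .
  qed
  have pr: "a \<in> PV V \<or> b \<in> PV V" if ab: "a * b \<in> PV V" for a b :: "('v,'a) mpoly"
  proof (rule ccontr)
    assume "\<not> (a \<in> PV V \<or> b \<in> PV V)"
    then have na: "a \<notin> PV V" and nb: "b \<notin> PV V" by auto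
    define A0 where "A0 = {s \<in> Poly_Mapping.keys a. \<forall>k\<in>V. Poly_Mapping.lookup s k = 0}"
    define B0 where "B0 = {s \<in> Poly_Mapping.keys b. \<forall>k\<in>V. Poly_Mapping.lookup s k = 0}"
    have "A0 \<noteq> {}" using na unfolding A0_def PV_mem by auto
    have "B0 \<noteq> {}" using nb unfolding B0_def PV_mem by auto
    have fA: "finite A0" "finite B0" unfolding A0_def B0_def by auto
    obtain s0 where s0: "s0 \<in> A0" "\<And>s. s \<in> A0 \<Longrightarrow> emb s \<le> emb s0"
    proof -
      have "Max (emb ` A0) \<in> emb ` A0" using fA \<open>A0 \<noteq> {}\<close> by (intro Max_in) auto
      then obtain s0 where "s0 \<in> A0" "emb s0 = Max (emb ` A0)" by auto
      moreover have "emb s \<le> Max (emb ` A0)" if "s \<in> A0" for s using fA that by (intro Max_ge) auto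
      ultimately show ?thesis using that by metis
    qed
    obtain t0 where t0: "t0 \<in> B0" "\<And>s. s \<in> B0 \<Longrightarrow> emb s \<le> emb t0"
    proof -
      have "Max (emb ` B0) \<in> emb ` B0" using fA \<open>B0 \<noteq> {}\<close> by (intro Max_in) auto
      then obtain t0 where "t0 \<in> B0" "emb t0 = Max (emb ` B0)" by auto
      moreover have "emb s \<le> Max (emb ` B0)" if "s \<in> B0" for s using fA that by (intro Max_ge) auto
      ultimately show ?thesis using that by metis
    qed
    have uniq: "l = s0 \<and> q = t0" if l: "l \<in> Poly_Mapping.keys a" and q: "q \<in> Poly_Mapping.keys b" and e: "l + q = s0 + t0" for l q
    proof -
      have "Poly_Mapping.lookup l k = 0 \<and> Poly_Mapping.lookup q k = 0" if "k \<in> V" for k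
      proof -
        have "Poly_Mapping.lookup (l + q) k = 0" unfolding e using s0(1) t0(1) that
          unfolding A0_def B0_def by (simp add: lookup_add)
        then show ?thesis by (simp add: lookup_add)
      qed
      then have "l \<in> A0" "q \<in> B0" unfolding A0_def B0_def using l q by auto
      then have le: "emb l \<le> emb s0" "emb q \<le> emb t0" using s0 t0 by auto
      have "emb l + emb q = emb s0 + emb t0" using e add by metis
      show ?thesis
      proof (cases "l = s0")
        case True then show ?thesis using e by simp
      next
        case False
        then have "emb l < emb s0" using le inj by (metis inj_eq order_le_imp_less_or_eq)
        then have "emb l + emb q < emb s0 + emb t0" using le(2) by (rule add_less_le_mono)
        then show ?thesis using \<open>emb l + emb q = emb s0 + emb t0\<close> by simp
      qed
    qed
    have "Poly_Mapping.lookup (a * b) (s0 + t0) = Poly_Mapping.lookup a s0 * Poly_Mapping.lookup b t0"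
      using s0(1) t0(1) uniq unfolding A0_def B0_def by (intro lookup_mult_unique) auto
    moreover have "Poly_Mapping.lookup a s0 \<noteq> 0" "Poly_Mapping.lookup b t0 \<noteq> 0"
      using s0(1) t0(1) unfolding A0_def B0_def by (auto simp: in_keys_iff)
    ultimately have "s0 + t0 \<in> Poly_Mapping.keys (a * b)" by (simp add: in_keys_iff)
    then obtain k where "k \<in> V" "0 < Poly_Mapping.lookup (s0 + t0) k" using ab unfolding PV_mem by blast
    then show False using s0(1) t0(1) unfolding A0_def B0_def by (simp add: lookup_add)
  qed
  show ?thesis unfolding prime_ideal_def using is_ideal_PV one pr by blast
qed


definition cover :: "('v, 'a::field) mpoly set \<Rightarrow> 'v set \<Rightarrow> bool" where
  "cover I V \<longleftrightarrow> (\<forall>g\<in>min_gens I. Poly_Mapping.keys g \<inter> V \<noteq> {})"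

definition mincover :: "('v, 'a::field) mpoly set \<Rightarrow> 'v set \<Rightarrow> bool" where
  "mincover I V \<longleftrightarrow> cover I V \<and> (\<forall>V'. V' \<subseteq> V \<longrightarrow> cover I V' \<longrightarrow> V' = V)"

lemma I_sub_PV: assumes "monomial_ideal (I :: ('v::finite,'a::field) mpoly set)" "cover I V"
  shows "I \<subseteq> PV V"
proof
  fix p assume p: "p \<in> I"
  have "\<exists>k\<in>V. 0 < Poly_Mapping.lookup t k" if t: "t \<in> Poly_Mapping.keys p" for t
  proof -
    have "mon t \<in> I" using p t mono_char[OF assms(1)] by blast
    then obtain g where g: "g \<in> min_gens I" "mdvd g t" using exists_min_gen[OF assms(1)] by blast
    then obtain k where k: "k \<in> Poly_Mapping.keys g" "k \<in> V" using assms(2) unfolding cover_def by blast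
    have "0 < Poly_Mapping.lookup g k" using k(1) by (simp add: in_keys_iff)
    also have "\<dots> \<le> Poly_Mapping.lookup t k" using g(2) unfolding mdvd_def by blast
    finally show ?thesis using k(2) by blast
  qed
  then show "p \<in> PV V" unfolding PV_mem by blast
qed

lemma PV_sub_prime: assumes P: "prime_ideal (P :: ('v,'a::field) mpoly set)" and V: "\<And>k. k \<in> V \<Longrightarrow> X k \<in> P"
  shows "PV V \<subseteq> P"
proof
  fix p :: "('v,'a) mpoly" assume p: "p \<in> PV V"
  have idl: "is_ideal P" using P unfolding prime_ideal_def by blast
  have "Poly_Mapping.single t (Poly_Mapping.lookup p t) \<in> P" if "t \<in> Poly_Mapping.keys p" for t
  proof -
    from p that obtain k where k: "k \<in> V" "0 < Poly_Mapping.lookup t k" unfolding PV_mem by blast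
    then have d: "mdvd (Poly_Mapping.single k 1) t" unfolding mdvd_def by (auto simp: lookup_single when_def)
    have "Poly_Mapping.single (t - Poly_Mapping.single k 1) (Poly_Mapping.lookup p t) * X k
       = Poly_Mapping.single (t - Poly_Mapping.single k 1 + Poly_Mapping.single k 1) (Poly_Mapping.lookup p t)"
      unfolding X_def mon_def mult_single by simp
    also have "\<dots> = Poly_Mapping.single t (Poly_Mapping.lookup p t)" unfolding mdvd_diff_add[OF d] ..
    finally show ?thesis using ideal_multL[OF idl V[OF k(1)]] by metis
  qed
  then have "(\<Sum>t\<in>Poly_Mapping.keys p. Poly_Mapping.single t (Poly_Mapping.lookup p t)) \<in> P"
    by (intro ideal_sum[OF idl]) auto
  then show "p \<in> P" using poly_expand[of p] by simp
qed

lemma minprime_mincover: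
  fixes I :: "('v::finite,'a::field) mpoly set"
  assumes mi: "monomial_ideal I" and P: "P \<in> min_primes I"
  shows "mincover I {k. X k \<in> P}"
proof -
  let ?V = "{k. X k \<in> P}"
  have Pp: "prime_ideal P" and IP: "I \<subseteq> P" and minP: "\<And>Q. prime_ideal Q \<Longrightarrow> I \<subseteq> Q \<Longrightarrow> Q \<subseteq> P \<Longrightarrow> Q = P"
    using P unfolding min_primes_def by blast+
  have cov: "cover I ?V" unfolding cover_def
  proof
    fix g assume g: "g \<in> min_gens I"
    then have "mon g \<in> P" using IP min_gen_in by blast
    then obtain k where "0 < Poly_Mapping.lookup g k" "X k \<in> P" using prime_mon[OF Pp] by blast
    then show "Poly_Mapping.keys g \<inter> ?V \<noteq> {}" by (auto simp: in_keys_iff)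
  qed
  have "V' = ?V" if V': "V' \<subseteq> ?V" "cover I V'" for V'
  proof -
    have "PV V' = P"
    proof (rule minP)
      show "prime_ideal (PV V' :: ('v,'a) mpoly set)" by (rule PV_prime)
      show "I \<subseteq> PV V'" by (rule I_sub_PV[OF mi V'(2)])
      show "PV V' \<subseteq> P" using V'(1) by (intro PV_sub_prime[OF Pp]) auto
    qed
    then have "k \<in> V'" if "k \<in> ?V" for k using that X_in_PV[of k V'] by auto
    then show ?thesis using V'(1) by auto
  qed
  then show ?thesis unfolding mincover_def using cov by blast
qed

lemma mon_notin_prime:
  fixes P :: "('v::finite,'a::field) mpoly set"
  assumes "prime_ideal P" "\<And>k. 0 < Poly_Mapping.lookup t k \<Longrightarrow> X k \<notin> P"
  shows "mon t \<notin> P"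
  using prime_mon[OF assms(1)] assms(2) by blast


definition irr :: "'v set \<Rightarrow> ('v \<Rightarrow> nat) \<Rightarrow> ('v, 'a::field) mpoly set" where
  "irr A e = ideal_gen ((\<lambda>i. mon (Poly_Mapping.single i (e i))) ` A)"

lemma mdvd_single: "mdvd (Poly_Mapping.single k n) t \<longleftrightarrow> n \<le> Poly_Mapping.lookup t k"
  unfolding mdvd_def by (auto simp: lookup_single when_def)

lemma irr_mset: "irr A e = (mset ((\<lambda>i. Poly_Mapping.single i (e i)) ` A) :: ('v,'a::field) mpoly set)"
proof -
  have "(\<lambda>i. mon (Poly_Mapping.single i (e i)) :: ('v,'a) mpoly) ` A = mon ` ((\<lambda>i. Poly_Mapping.single i (e i)) ` A)"
    by (simp add: image_image)
  then show ?thesis unfolding irr_def using ideal_gen_mon by metis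
qed

lemma irr_mon: "(mon w :: ('v,'a::field) mpoly) \<in> irr A e \<longleftrightarrow> (\<exists>k\<in>A. e k \<le> Poly_Mapping.lookup w k)"
  unfolding irr_mset mon_mset by (auto simp: mdvd_single)

lemma irr_char: "(p :: ('v,'a::field) mpoly) \<in> irr A e \<longleftrightarrow> (\<forall>t\<in>Poly_Mapping.keys p. mon t \<in> irr A e)"
  unfolding irr_mset mset_def mon_mset by simp

lemma irr_pow_keys:
  fixes q :: "('v,'a::field) mpoly"
  assumes q: "q \<in> irr A e" and e: "\<And>k. k \<in> A \<Longrightarrow> 1 \<le> e k" and fA: "finite A"
  shows "t \<in> Poly_Mapping.keys (q ^ n) \<Longrightarrow> n \<le> (\<Sum>k\<in>A. Poly_Mapping.lookup t k)"
proof (induction n arbitrary: t)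
  case 0 then show ?case by simp
next
  case (Suc n)
  have "t \<in> Poly_Mapping.keys (q * q ^ n)" using Suc.prems by simp
  then obtain s r where sr: "t = s + r" "s \<in> Poly_Mapping.keys q" "r \<in> Poly_Mapping.keys (q ^ n)"
    using keys_mult[of q "q ^ n"] by blast
  have "mon s \<in> irr A e" using q sr(2) irr_char by blast
  then obtain k where k: "k \<in> A" "e k \<le> Poly_Mapping.lookup s k" unfolding irr_mon by blast
  have "1 \<le> Poly_Mapping.lookup s k" using k e by (meson order_trans)
  also have "\<dots> \<le> (\<Sum>k\<in>A. Poly_Mapping.lookup s k)" using k(1) fA by (intro member_le_sum) auto
  finally have s1: "1 \<le> (\<Sum>k\<in>A. Poly_Mapping.lookup s k)" .
  have "(\<Sum>k\<in>A. Poly_Mapping.lookup t k) = (\<Sum>k\<in>A. Poly_Mapping.lookup s k) + (\<Sum>k\<in>A. Poly_Mapping.lookup r k)"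
    unfolding sr(1) by (simp add: lookup_add sum.distrib)
  then show ?case using s1 Suc.IH[OF sr(3)] by simp
qed

lemma irr_pow_mem:
  fixes q :: "('v,'a::field) mpoly"
  assumes q: "q \<in> irr A e1" and e1: "\<And>k. k \<in> A \<Longrightarrow> 1 \<le> e1 k" and fA: "finite A" and ne: "A \<noteq> {}"
  shows "q ^ (card A * Max (e2 ` A)) \<in> irr A e2"
proof -
  let ?E = "Max (e2 ` A)"
  have "mon t \<in> irr A e2" if t: "t \<in> Poly_Mapping.keys (q ^ (card A * ?E))" for t
  proof (rule ccontr)
    assume "mon t \<notin> irr A e2"
    then have lt: "Poly_Mapping.lookup t k < e2 k" if "k \<in> A" for k using that unfolding irr_mon by (meson not_le)
    have "e2 k \<le> ?E" if "k \<in> A" for k using fA that by (intro Max_ge) auto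
    then have "Poly_Mapping.lookup t k < ?E" if "k \<in> A" for k using lt that order.strict_trans2 by blast
    then have "(\<Sum>k\<in>A. Poly_Mapping.lookup t k) < (\<Sum>k\<in>A. ?E)" using fA ne by (intro sum_strict_mono) auto
    also have "\<dots> = card A * ?E" by simp
    finally show False using irr_pow_keys[OF q e1 fA t] by simp
  qed
  then show ?thesis using irr_char by blast
qed

lemma radical_irr_sub:
  fixes f :: "('v,'a::field) mpoly"
  assumes e1: "\<And>k. k \<in> A \<Longrightarrow> 1 \<le> e1 k" and fA: "finite A" and ne: "A \<noteq> {}"
  shows "radical (irr A e1 :: ('v,'a) mpoly set) \<subseteq> radical (irr A e2)"
proof
  fix f :: "('v,'a) mpoly" assume "f \<in> radical (irr A e1)"
  then obtain n where n: "f ^ n \<in> irr A e1" unfolding radical_def by blast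
  have "(f ^ n) ^ (card A * Max (e2 ` A)) \<in> irr A e2" by (rule irr_pow_mem[OF n e1 fA ne])
  then show "f \<in> radical (irr A e2)" unfolding radical_def by (metis (mono_tags, lifting) mem_Collect_eq power_mult)
qed

lemma radical_irr_eq:
  assumes e1: "\<And>k. k \<in> A \<Longrightarrow> 1 \<le> e1 k" and e2: "\<And>k. k \<in> A \<Longrightarrow> 1 \<le> e2 k" and fA: "finite A" and ne: "A \<noteq> {}"
  shows "radical (irr A e1 :: ('v,'a::field) mpoly set) = radical (irr A e2)"
proof
  show "radical (irr A e1 :: ('v,'a) mpoly set) \<subseteq> radical (irr A e2)"
    by (rule radical_irr_sub) (use e1 fA ne in auto)
  show "radical (irr A e2 :: ('v,'a) mpoly set) \<subseteq> radical (irr A e1)"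
    by (rule radical_irr_sub) (use e2 fA ne in auto)
qed

lemma irreducible_irr: "irreducible_monomial_ideal Q \<longleftrightarrow> (\<exists>A e. A \<noteq> {} \<and> (\<forall>i\<in>A. 1 \<le> e i) \<and> Q = irr A e)"
  unfolding irreducible_monomial_ideal_def irr_def by simp


lemma finite_bounded_pm: "finite {w :: 'v::finite \<Rightarrow>\<^sub>0 nat. \<forall>k. Poly_Mapping.lookup w k \<le> B}"
proof -
  have "Poly_Mapping.lookup ` {w :: 'v \<Rightarrow>\<^sub>0 nat. \<forall>k. Poly_Mapping.lookup w k \<le> B} \<subseteq> (\<Pi>\<^sub>E k\<in>UNIV. {..B})"
  proof
    fix f assume "f \<in> Poly_Mapping.lookup ` {w :: 'v \<Rightarrow>\<^sub>0 nat. \<forall>k. Poly_Mapping.lookup w k \<le> B}"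
    then obtain w where "f = Poly_Mapping.lookup w" "\<forall>k. Poly_Mapping.lookup w k \<le> B" by blast
    then show "f \<in> (\<Pi>\<^sub>E k\<in>UNIV. {..B})" by (simp add: PiE_iff)
  qed
  moreover have "finite (\<Pi>\<^sub>E k\<in>(UNIV::'v set). {..B})" by (rule finite_PiE) simp_all
  ultimately have "finite (Poly_Mapping.lookup ` {w :: 'v \<Rightarrow>\<^sub>0 nat. \<forall>k. Poly_Mapping.lookup w k \<le> B})"
    by (rule finite_subset)
  moreover have "inj_on Poly_Mapping.lookup {w :: 'v \<Rightarrow>\<^sub>0 nat. \<forall>k. Poly_Mapping.lookup w k \<le> B}"
    by (rule inj_onI) (rule poly_mapping_eqI, simp)
  ultimately show ?thesis by (rule finite_imageD)
qed

lemma exists_irred_decomp: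
  fixes I :: "('v::finite,'a::field) mpoly set"
  assumes s2: "support2 I" and ne: "min_gens I \<noteq> {}"
  shows "\<exists>D. irred_decomp I D"
proof -
  have mi: "monomial_ideal I" using s2 unfolding support2_def by blast
  define B where "B = Max ((\<lambda>(g, k). Poly_Mapping.lookup g k) ` (min_gens I \<times> UNIV))"
  have fin: "finite ((\<lambda>(g, k). Poly_Mapping.lookup g k) ` (min_gens I \<times> (UNIV :: 'v set)))"
    by (intro finite_imageI finite_cartesian_product min_gens_finite[OF s2] finite_UNIV)
  have gB: "Poly_Mapping.lookup g k \<le> B" if "g \<in> min_gens I" for g k
  proof -
    have "(g, k) \<in> min_gens I \<times> UNIV" using that by simp
    then have "Poly_Mapping.lookup g k \<in> (\<lambda>(g, k). Poly_Mapping.lookup g k) ` (min_gens I \<times> UNIV)"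
      by (rule rev_image_eqI) simp
    then show ?thesis unfolding B_def using fin by (rule Max_ge[rotated])
  qed
  define Aw where "Aw w = {k. Poly_Mapping.lookup w k < B}" for w :: "'v \<Rightarrow>\<^sub>0 nat"
  define ew where "ew w k = Poly_Mapping.lookup w k + 1" for w :: "'v \<Rightarrow>\<^sub>0 nat" and k
  define Q where "Q w = (irr (Aw w) (ew w) :: ('v,'a) mpoly set)" for w
  define W where "W = {w :: 'v \<Rightarrow>\<^sub>0 nat. mon w \<notin> I \<and> (\<forall>k. Poly_Mapping.lookup w k \<le> B)}"
  define D0 where "D0 = Q ` W"
  have finW: "finite W"
  proof (rule finite_subset[OF _ finite_bounded_pm[of B]])
    show "W \<subseteq> {w. \<forall>k. Poly_Mapping.lookup w k \<le> B}" unfolding W_def by blast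
  qed
  then have finD0: "finite D0" unfolding D0_def by simp
  have irrQ: "irreducible_monomial_ideal (Q w)" if w: "w \<in> W" for w
  proof -
    have "Aw w \<noteq> {}"
    proof
      assume "Aw w = {}"
      then have "\<not> Poly_Mapping.lookup w k < B" for k unfolding Aw_def by blast
      then have Bw: "B \<le> Poly_Mapping.lookup w k" for k by (simp add: not_less)
      obtain g where g: "g \<in> min_gens I" using ne by blast
      have "Poly_Mapping.lookup g k \<le> Poly_Mapping.lookup w k" for k using gB[OF g, of k] Bw[of k] by linarith
      then have "mdvd g w" unfolding mdvd_def by blast
      then have "mon w \<in> I" using mono_dvd[OF mi min_gen_in[OF g]] by blast
      then show False using w unfolding W_def by blast
    qed
    then show ?thesis unfolding irreducible_irr
    proof (intro exI conjI)
      show "\<forall>i\<in>Aw w. 1 \<le> ew w i" by (simp add: ew_def)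
      show "Q w = irr (Aw w) (ew w)" by (simp add: Q_def)
    qed
  qed
  have ISub: "I \<subseteq> Q w" if w: "w \<in> W" for w
  proof
    fix p assume p: "p \<in> I"
    have "mon t \<in> Q w" if t: "t \<in> Poly_Mapping.keys p" for t
    proof -
      have "mon t \<in> I" using p t mono_char[OF mi] by blast
      then obtain g where g: "g \<in> min_gens I" "mdvd g t" using exists_min_gen[OF mi] by blast
      have "\<not> mdvd g w"
      proof
        assume "mdvd g w"
        then have "mon w \<in> I" using mono_dvd[OF mi min_gen_in[OF g(1)]] by blast
        then show False using w unfolding W_def by blast
      qed
      then obtain k where k: "Poly_Mapping.lookup w k < Poly_Mapping.lookup g k" unfolding mdvd_def by (auto simp: not_le)
      then have "k \<in> Aw w" unfolding Aw_def using gB[OF g(1), of k] by simp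
      moreover have "ew w k \<le> Poly_Mapping.lookup t k"
      proof -
        have "Poly_Mapping.lookup g k \<le> Poly_Mapping.lookup t k" using g(2) unfolding mdvd_def by blast
        then show ?thesis unfolding ew_def using k by linarith
      qed
      ultimately show ?thesis unfolding Q_def irr_mon by blast
    qed
    then show "p \<in> Q w" unfolding Q_def using irr_char[of p "Aw w" "ew w"] by blast
  qed
  have InterSub: "\<Inter>D0 \<subseteq> I"
  proof
    fix p assume p: "p \<in> \<Inter>D0"
    have "mon t \<in> I" if t: "t \<in> Poly_Mapping.keys p" for t
    proof (rule ccontr)
      assume nt: "mon t \<notin> I"
      define w where "w = Abs_poly_mapping (\<lambda>k. min (Poly_Mapping.lookup t k) B)"
      have lw: "Poly_Mapping.lookup w k = min (Poly_Mapping.lookup t k) B" for k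
        unfolding w_def by simp
      have "mon w \<notin> I"
      proof
        assume "mon w \<in> I"
        moreover have "mdvd w t" unfolding mdvd_def lw by simp
        ultimately have "mon t \<in> I" using mono_dvd[OF mi] by blast
        then show False using nt by blast
      qed
      then have wW: "w \<in> W" by (simp add: W_def lw)
      then have "p \<in> Q w" using p unfolding D0_def by blast
      then have "mon t \<in> Q w" using t irr_char[of p "Aw w" "ew w"] unfolding Q_def by blast
      then obtain k where "k \<in> Aw w" "ew w k \<le> Poly_Mapping.lookup t k" unfolding Q_def irr_mon by blast
      then show False unfolding Aw_def ew_def lw by auto
    qed
    then show "p \<in> I" using mono_char[OF mi] by blast
  qed
  have D0I: "\<Inter>D0 = I" using InterSub ISub unfolding D0_def by blast
  define F where "F = {D. D \<subseteq> D0 \<and> \<Inter>D = I}"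
  have "D0 \<in> F" unfolding F_def using D0I by blast
  then obtain D where D: "D \<in> F" and least: "\<And>D'. D' \<in> F \<Longrightarrow> card D \<le> card D'"
    using ex_has_least_nat[of "\<lambda>D. D \<in> F" D0 card] by blast
  have DD0: "D \<subseteq> D0" and DI: "\<Inter>D = I" using D unfolding F_def by blast+
  have finD: "finite D" using finite_subset[OF DD0 finD0] .
  have "irred_decomp I D" unfolding irred_decomp_def
  proof (intro conjI ballI)
    show "finite D" by (rule finD)
    show "irreducible_monomial_ideal Q'" if "Q' \<in> D" for Q'
      using that DD0 irrQ unfolding D0_def by blast
    show "I = \<Inter>D" using DI by simp
    show "\<Inter>(D - {Q'}) \<noteq> I" if Q': "Q' \<in> D" for Q'
    proof
      assume "\<Inter>(D - {Q'}) = I"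
      then have "D - {Q'} \<in> F" unfolding F_def using DD0 by blast
      then have "card D \<le> card (D - {Q'})" by (rule least)
      moreover have "card (D - {Q'}) < card D" using finD Q' by (meson card_Diff1_less)
      ultimately show False by simp
    qed
  qed
  then show ?thesis by blast
qed


lemma two_elem_other: assumes "K = {x, y}" "x \<noteq> y" "i \<in> K" shows "\<exists>z. K = {i, z} \<and> z \<noteq> i"
proof (cases "i = x")
  case True then show ?thesis using assms by blast
next
  case False then have "i = y" using assms by blast
  then show ?thesis using assms by blast
qed

lemma keys_two_cases:
  assumes K: "Poly_Mapping.keys g = {x, y}" and xy: "x \<noteq> y" and ij: "i \<noteq> j"
  shows "(Poly_Mapping.keys g = {i, j}) \<or> (i \<in> Poly_Mapping.keys g \<and> j \<notin> Poly_Mapping.keys g \<and> (\<exists>z. z \<noteq> i \<and> z \<noteq> j \<and> Poly_Mapping.keys g = {i, z}))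
     \<or> (j \<in> Poly_Mapping.keys g \<and> i \<notin> Poly_Mapping.keys g \<and> (\<exists>z. z \<noteq> i \<and> z \<noteq> j \<and> Poly_Mapping.keys g = {j, z}))
     \<or> (i \<notin> Poly_Mapping.keys g \<and> j \<notin> Poly_Mapping.keys g)"
proof (cases "i \<in> Poly_Mapping.keys g")
  case True
  then obtain z where z: "Poly_Mapping.keys g = {i, z}" "z \<noteq> i" using two_elem_other[OF K xy] by blast
  show ?thesis
  proof (cases "z = j")
    case True then show ?thesis using z by simp
  next
    case False
    then have "j \<notin> Poly_Mapping.keys g" using z ij by simp
    then show ?thesis using z False True by blast
  qed
next
  case False
  show ?thesis
  proof (cases "j \<in> Poly_Mapping.keys g")
    case True
    then obtain z where z: "Poly_Mapping.keys g = {j, z}" "z \<noteq> j" using two_elem_other[OF K xy] by blast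
    have "z \<noteq> i" using z False by auto
    then show ?thesis using z False True by blast
  next
    case False2: False
    then show ?thesis using False by blast
  qed
qed

lemma staircase:
  fixes I :: "('v::finite,'a::field) mpoly set"
  assumes s2: "support2 I" and md: "minimal_irred_decomp I" and mc: "mincover I V"
    and iV: "i \<in> V" and jV: "j \<in> V" and ij: "i \<noteq> j"
    and pb: "\<And>g k. g \<in> min_gens I \<Longrightarrow> Poly_Mapping.keys g = {i, k} \<Longrightarrow> k \<notin> V \<Longrightarrow> p \<le> Poly_Mapping.lookup g i"
    and sb: "\<And>g l. g \<in> min_gens I \<Longrightarrow> Poly_Mapping.keys g = {j, l} \<Longrightarrow> l \<notin> V \<Longrightarrow> s \<le> Poly_Mapping.lookup g j"
    and m: "m \<in> min_gens I" "Poly_Mapping.keys m = {i, j}"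
  shows "p \<le> Poly_Mapping.lookup m i \<or> s \<le> Poly_Mapping.lookup m j"
proof (rule ccontr)
  assume nm: "\<not> (p \<le> Poly_Mapping.lookup m i \<or> s \<le> Poly_Mapping.lookup m j)"
  have mi: "monomial_ideal I" using s2 unfolding support2_def by blast
  have cov: "cover I V" using mc unfolding mincover_def by blast
  define viol where "viol g \<longleftrightarrow> g \<in> min_gens I \<and> Poly_Mapping.keys g = {i, j} \<and> Poly_Mapping.lookup g i < p \<and> Poly_Mapping.lookup g j < s" for g
  have "viol m" using m nm unfolding viol_def by auto
  obtain m1 where m1: "viol m1" and m1l: "\<And>g. viol g \<Longrightarrow> Poly_Mapping.lookup m1 i \<le> Poly_Mapping.lookup g i"
    using ex_has_least_nat[of viol m "\<lambda>g. Poly_Mapping.lookup g i"] \<open>viol m\<close> by blast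
  obtain m2 where m2: "viol m2" and m2l: "\<And>g. viol g \<Longrightarrow> Poly_Mapping.lookup m2 j \<le> Poly_Mapping.lookup g j"
    using ex_has_least_nat[of viol m "\<lambda>g. Poly_Mapping.lookup g j"] \<open>viol m\<close> by blast
  have m1i: "1 \<le> Poly_Mapping.lookup m1 i" using m1 unfolding viol_def
    by (metis insertI1 in_keys_iff less_one not_le)
  have m2j: "1 \<le> Poly_Mapping.lookup m2 j" using m2 unfolding viol_def
    by (metis insertI1 insert_commute in_keys_iff less_one not_le)
  have m1p: "Poly_Mapping.lookup m1 i < p" "Poly_Mapping.lookup m1 j < s" using m1 unfolding viol_def by auto
  have m2p: "Poly_Mapping.lookup m2 i < p" "Poly_Mapping.lookup m2 j < s" using m2 unfolding viol_def by auto
  have ne: "min_gens I \<noteq> {}" using m by blast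
  obtain D where D: "irred_decomp I D" using exists_irred_decomp[OF s2 ne] by blast
  have finD: "finite D" and irrD: "\<And>Q. Q \<in> D \<Longrightarrow> irreducible_monomial_ideal Q" and ID: "I = \<Inter>D"
    using D unfolding irred_decomp_def by blast+
  have "\<forall>Q\<in>D. \<exists>Ae. fst Ae \<noteq> {} \<and> (\<forall>k\<in>fst Ae. 1 \<le> snd Ae k) \<and> Q = irr (fst Ae) (snd Ae)"
    using irrD unfolding irreducible_irr by fastforce
  from bchoice[OF this] obtain r where r: "\<And>Q. Q \<in> D \<Longrightarrow> fst (r Q) \<noteq> {} \<and> (\<forall>k\<in>fst (r Q). 1 \<le> snd (r Q) k) \<and> Q = irr (fst (r Q)) (snd (r Q))"
    by blast
  define N where "N = (\<Sum>Q\<in>D. \<Sum>k\<in>UNIV. snd (r Q) k)"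
  have Nb: "snd (r Q) k \<le> N" if "Q \<in> D" for Q k
  proof -
    have "snd (r Q) k \<le> (\<Sum>k\<in>UNIV. snd (r Q) k)" by (rule member_le_sum) auto
    also have "\<dots> \<le> N" unfolding N_def using finD that by (intro member_le_sum) auto
    finally show ?thesis .
  qed
  define Out where "Out = Abs_poly_mapping (\<lambda>k. if k \<in> V then 0 else N)"
  define wf where "wf x y = Poly_Mapping.single i x + Poly_Mapping.single j y + Out" for x y :: nat
  have lO: "Poly_Mapping.lookup Out k = (if k \<in> V then 0 else N)" for k unfolding Out_def by simp
  have lw: "Poly_Mapping.lookup (wf x y) k = (if k = i then x else if k = j then y else if k \<in> V then 0 else N)" for x y k
    unfolding wf_def using iV jV ij by (auto simp: lookup_add lookup_single when_def lO)
  have notinI: "mon (wf x y) \<notin> I" if c1: "\<And>g. g \<in> min_gens I \<Longrightarrow> Poly_Mapping.keys g = {i, j} \<Longrightarrow> \<not> (Poly_Mapping.lookup g i \<le> x \<and> Poly_Mapping.lookup g j \<le> y)"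
    and c2: "x < p" and c3: "y < s" for x y
  proof
    assume "mon (wf x y) \<in> I"
    then obtain g where g: "g \<in> min_gens I" "mdvd g (wf x y)" using exists_min_gen[OF mi] by blast
    obtain x0 y0 where xy: "x0 \<noteq> y0" "Poly_Mapping.keys g = {x0, y0}" using support2_keys[OF s2 g(1)] by blast
    have kz: "z = i \<or> z = j" if "z \<in> Poly_Mapping.keys g" "z \<in> V" for z
    proof (rule ccontr)
      assume "\<not> (z = i \<or> z = j)"
      then have "Poly_Mapping.lookup (wf x y) z = 0" using that(2) by (simp add: lw)
      moreover have "0 < Poly_Mapping.lookup g z" using that(1) by (simp add: in_keys_iff)
      moreover have "Poly_Mapping.lookup g z \<le> Poly_Mapping.lookup (wf x y) z" using g(2) unfolding mdvd_def by blast
      ultimately show False by simp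
    qed
    have "Poly_Mapping.lookup g i \<le> Poly_Mapping.lookup (wf x y) i" "Poly_Mapping.lookup g j \<le> Poly_Mapping.lookup (wf x y) j"
      using g(2) unfolding mdvd_def by blast+
    then have gi: "Poly_Mapping.lookup g i \<le> x" and gj: "Poly_Mapping.lookup g j \<le> y"
      using ij by (simp_all add: lw)
    from keys_two_cases[OF xy(2) xy(1) ij] show False
    proof (elim disjE conjE exE)
      assume "Poly_Mapping.keys g = {i, j}"
      then show False using c1[OF g(1)] gi gj by blast
    next
      fix z assume "i \<in> Poly_Mapping.keys g" "z \<noteq> i" "z \<noteq> j" "Poly_Mapping.keys g = {i, z}"
      then have "z \<notin> V" using kz by blast
      then have "p \<le> Poly_Mapping.lookup g i" using pb[OF g(1) \<open>Poly_Mapping.keys g = {i, z}\<close>] by blast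
      then show False using gi c2 by simp
    next
      fix z assume "j \<in> Poly_Mapping.keys g" "z \<noteq> i" "z \<noteq> j" "Poly_Mapping.keys g = {j, z}"
      then have "z \<notin> V" using kz by blast
      then have "s \<le> Poly_Mapping.lookup g j" using sb[OF g(1) \<open>Poly_Mapping.keys g = {j, z}\<close>] by blast
      then show False using gj c3 by simp
    next
      assume "i \<notin> Poly_Mapping.keys g" "j \<notin> Poly_Mapping.keys g"
      then have "Poly_Mapping.keys g \<inter> V = {}" using kz by blast
      then show False using cov g(1) unfolding cover_def by blast
    qed
  qed
  have comp: "\<exists>Q\<in>D. mon (wf x y) \<notin> Q \<and> fst (r Q) = V" if nI: "mon (wf x y) \<notin> I" for x y
  proof -
    obtain Q where Q: "Q \<in> D" "mon (wf x y) \<notin> Q" using nI ID by blast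
    obtain A e where Ae: "A = fst (r Q)" "e = snd (r Q)" by blast
    have Qr: "Q = irr A e" and e1: "\<forall>k\<in>A. 1 \<le> e k" using r[OF Q(1)] Ae by blast+
    have AV: "A \<subseteq> V"
    proof
      fix k assume k: "k \<in> A"
      show "k \<in> V"
      proof (rule ccontr)
        assume "k \<notin> V"
        then have "e k \<le> Poly_Mapping.lookup (wf x y) k" using Nb[OF Q(1), of k] iV jV Ae by (auto simp: lw)
        then have "mon (wf x y) \<in> Q" unfolding Qr irr_mon using k by blast
        then show False using Q(2) by blast
      qed
    qed
    have "cover I A" unfolding cover_def
    proof
      fix g assume g: "g \<in> min_gens I"
      then have "mon g \<in> Q" using ID min_gen_in Q(1) by blast
      then obtain k where k: "k \<in> A" "e k \<le> Poly_Mapping.lookup g k" unfolding Qr irr_mon by blast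
      then have "k \<in> Poly_Mapping.keys g" using e1 by (metis in_keys_iff le_zero_eq one_neq_zero)
      then show "Poly_Mapping.keys g \<inter> A \<noteq> {}" using k(1) by blast
    qed
    then have "A = V" using mc AV unfolding mincover_def by blast
    then show ?thesis using Q Ae by blast
  qed
  let ?a = "Poly_Mapping.lookup m1 i" and ?b = "Poly_Mapping.lookup m2 j"
  have n1: "mon (wf (?a - 1) (s - 1)) \<notin> I"
  proof (rule notinI)
    fix g assume g: "g \<in> min_gens I" "Poly_Mapping.keys g = {i, j}"
    show "\<not> (Poly_Mapping.lookup g i \<le> ?a - 1 \<and> Poly_Mapping.lookup g j \<le> s - 1)"
    proof
      assume a: "Poly_Mapping.lookup g i \<le> ?a - 1 \<and> Poly_Mapping.lookup g j \<le> s - 1"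
      have "viol g" unfolding viol_def using g a m1p m1i by auto
      then have "?a \<le> Poly_Mapping.lookup g i" by (rule m1l)
      then show False using a m1i by linarith
    qed
  next
    show "?a - 1 < p" using m1p by linarith
    show "s - 1 < s" using m1p by linarith
  qed
  have n2: "mon (wf (p - 1) (?b - 1)) \<notin> I"
  proof (rule notinI)
    fix g assume g: "g \<in> min_gens I" "Poly_Mapping.keys g = {i, j}"
    show "\<not> (Poly_Mapping.lookup g i \<le> p - 1 \<and> Poly_Mapping.lookup g j \<le> ?b - 1)"
    proof
      assume a: "Poly_Mapping.lookup g i \<le> p - 1 \<and> Poly_Mapping.lookup g j \<le> ?b - 1"
      have "viol g" unfolding viol_def using g a m2p m2j by auto
      then have "?b \<le> Poly_Mapping.lookup g j" by (rule m2l)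
      then show False using a m2j by linarith
    qed
  next
    show "p - 1 < p" using m2p by linarith
    show "?b - 1 < s" using m2p by linarith
  qed
  obtain Q1 where Q1: "Q1 \<in> D" "mon (wf (?a - 1) (s - 1)) \<notin> Q1" "fst (r Q1) = V" using comp[OF n1] by blast
  obtain Q2 where Q2: "Q2 \<in> D" "mon (wf (p - 1) (?b - 1)) \<notin> Q2" "fst (r Q2) = V" using comp[OF n2] by blast
  obtain E1 where E1: "E1 = snd (r Q1)" by blast
  obtain E2 where E2: "E2 = snd (r Q2)" by blast
  have Q1r: "Q1 = irr V E1" and e1: "\<forall>k\<in>V. 1 \<le> E1 k" using r[OF Q1(1)] Q1(3) E1 by auto
  have Q2r: "Q2 = irr V E2" and e2: "\<forall>k\<in>V. 1 \<le> E2 k" using r[OF Q2(1)] Q2(3) E2 by auto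
  have "mon m1 \<in> Q1" using ID Q1(1) min_gen_in m1 unfolding viol_def by blast
  then obtain k where k: "k \<in> V" "E1 k \<le> Poly_Mapping.lookup m1 k" unfolding Q1r irr_mon by blast
  have lt: "Poly_Mapping.lookup (wf (?a - 1) (s - 1)) k' < E1 k'" if "k' \<in> V" for k'
    using Q1(2) that unfolding Q1r irr_mon by (meson not_le)
  have "k = i"
  proof (rule ccontr)
    assume "k \<noteq> i"
    have "k \<in> Poly_Mapping.keys m1" using k e1 by (metis in_keys_iff le_zero_eq one_neq_zero)
    then have "k = j" using m1 \<open>k \<noteq> i\<close> unfolding viol_def by auto
    then have "s - 1 < E1 j" using lt[OF jV] ij by (simp add: lw)
    moreover have "E1 j \<le> Poly_Mapping.lookup m1 j" using k(2) \<open>k = j\<close> by simp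
    ultimately show False using m1p by linarith
  qed
  then have "E1 i \<le> Poly_Mapping.lookup m1 i" using k(2) by simp
  then have "E1 i \<le> p - 1" using m1p by linarith
  then have "mon (wf (p - 1) (?b - 1)) \<in> Q1" unfolding Q1r irr_mon using iV by (auto simp: lw)
  then have "Q1 \<noteq> Q2" using Q2(2) by blast
  moreover have "radical Q1 = radical Q2" unfolding Q1r Q2r
    by (rule radical_irr_eq) (use e1 e2 iV in auto)
  ultimately show False using md D Q1(1) Q2(1) unfolding minimal_irred_decomp_def by blast
qed


lemma lookup_two: assumes "Poly_Mapping.keys g = {x, y}"
  shows "Poly_Mapping.lookup g k = (if k = x then Poly_Mapping.lookup g x else if k = y then Poly_Mapping.lookup g y else 0)"
proof (cases "k = x \<or> k = y")
  case True then show ?thesis by auto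
next
  case False
  then have "k \<notin> Poly_Mapping.keys g" using assms by simp
  then show ?thesis using False by (simp add: in_keys_iff)
qed

lemma sub_two: assumes "K = {x, y}" "x \<noteq> y" "K \<subseteq> {i, j}" shows "K = {i, j}"
proof -
  have "x \<in> {i, j}" "y \<in> {i, j}" using assms by auto
  then have "(x = i \<and> y = j) \<or> (x = j \<and> y = i)" using assms(2) by auto
  then show ?thesis using assms(1) by auto
qed

lemma mdvdI: "(\<And>k. Poly_Mapping.lookup a k \<le> Poly_Mapping.lookup b k) \<Longrightarrow> mdvd a b"
  unfolding mdvd_def by blast

lemma keys_pos: "k \<in> Poly_Mapping.keys g \<Longrightarrow> 1 \<le> Poly_Mapping.lookup (g :: 'v \<Rightarrow>\<^sub>0 nat) k"
  by (simp add: in_keys_iff Suc_le_eq)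


theorem lemma2p2:
  fixes I :: "('v::finite, 'a::field) mpoly set"
  assumes "support2 I"
    and "minimal_irred_decomp I"
    and "\<exists>i j. i \<noteq> j \<and> alpha I i j \<ge> 2"
  shows "symbolic_power I 2 \<noteq> ideal_pow I 2"
proof -
  note s2 = assms(1) and md = assms(2)
  have mi: "monomial_ideal I" using s2 unfolding support2_def by blast
  have idI: "is_ideal I" using monomial_ideal_is_ideal[OF mi] .
  have pow2: "ideal_pow I 2 = ideal_prod I I" using ideal_pow2[OF idI] .
  obtain i j where ij: "i \<noteq> j" and al: "2 \<le> alpha I i j" using assms(3) by blast
  define G where "G = {m \<in> min_gens I. Poly_Mapping.keys m = {i, j}}"
  have cG: "2 \<le> card G" using al unfolding G_def alpha_def by simp
  then have finG: "finite G" by (metis card.infinite not_numeral_le_zero)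
  have "G \<noteq> {}" using cG by auto
  then obtain g0 where g0: "g0 \<in> G" by blast
  have Gm: "m \<in> min_gens I" "Poly_Mapping.keys m = {i, j}" if "m \<in> G" for m using that unfolding G_def by blast+
  have Gpos: "1 \<le> Poly_Mapping.lookup m i" "1 \<le> Poly_Mapping.lookup m j" if "m \<in> G" for m
  proof -
    have "i \<in> Poly_Mapping.keys m" "j \<in> Poly_Mapping.keys m" using Gm(2)[OF that] by simp_all
    then show "1 \<le> Poly_Mapping.lookup m i" "1 \<le> Poly_Mapping.lookup m j" by (simp_all add: in_keys_iff Suc_le_eq)
  qed
  have Gz: "Poly_Mapping.lookup m k = 0" if "m \<in> G" "k \<noteq> i" "k \<noteq> j" for m k
    using lookup_two[OF Gm(2)[OF that(1)], of k] that by simp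
  have eqG: "g = g'" if "g \<in> G" "g' \<in> G" "Poly_Mapping.lookup g i \<le> Poly_Mapping.lookup g' i"
    "Poly_Mapping.lookup g j \<le> Poly_Mapping.lookup g' j" for g g'
    using pair_le_eq[OF Gm(1)[OF that(1)] Gm(1)[OF that(2)] Gm(2)[OF that(1)]] that(3,4) .
  obtain m1 where m1: "m1 \<in> G" and m1l: "\<And>g. g \<in> G \<Longrightarrow> Poly_Mapping.lookup m1 i \<le> Poly_Mapping.lookup g i"
    using ex_has_least_nat[of "\<lambda>g. g \<in> G" g0 "\<lambda>g. Poly_Mapping.lookup g i"] g0 by blast
  obtain mr where mr: "mr \<in> G" and mrl: "\<And>g. g \<in> G \<Longrightarrow> Poly_Mapping.lookup mr j \<le> Poly_Mapping.lookup g j"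
    using ex_has_least_nat[of "\<lambda>g. g \<in> G" g0 "\<lambda>g. Poly_Mapping.lookup g j"] g0 by blast
  define a1 where "a1 = Poly_Mapping.lookup m1 i"
  define b1 where "b1 = Poly_Mapping.lookup m1 j"
  define ar where "ar = Poly_Mapping.lookup mr i"
  define br where "br = Poly_Mapping.lookup mr j"
  have m1r: "m1 \<noteq> mr"
  proof
    assume e: "m1 = mr"
    have "G \<subseteq> {m1}"
    proof
      fix g assume g: "g \<in> G"
      have "m1 = g" using eqG[OF m1 g] m1l[OF g] mrl[OF g] e by simp
      then show "g \<in> {m1}" by simp
    qed
    then have "card G \<le> 1" using card_mono[of "{m1}" G] by simp
    then show False using cG by simp
  qed
  have a1ar: "a1 < ar"
  proof (rule ccontr)
    assume "\<not> a1 < ar"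
    then have "ar \<le> a1" by simp
    moreover have "br \<le> b1" unfolding br_def b1_def using mrl[OF m1] .
    ultimately have "mr = m1" using eqG[OF mr m1] unfolding a1_def ar_def b1_def br_def by blast
    then show False using m1r by simp
  qed
  have brb1: "br < b1"
  proof (rule ccontr)
    assume "\<not> br < b1"
    then have "b1 \<le> br" by simp
    moreover have "a1 \<le> ar" unfolding a1_def ar_def using m1l[OF mr] .
    ultimately have "m1 = mr" using eqG[OF m1 mr] unfolding a1_def ar_def b1_def br_def by blast
    then show False using m1r by simp
  qed
  have ar1: "1 \<le> ar" unfolding ar_def using Gpos[OF mr] by simp
  have b11: "1 \<le> b1" unfolding b1_def using Gpos[OF m1] by simp
  define pS where "pS V = {Poly_Mapping.lookup g i | g. g \<in> min_gens I \<and> (\<exists>k. Poly_Mapping.keys g = {i, k} \<and> k \<notin> V)}" for V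
  define sS where "sS V = {Poly_Mapping.lookup g j | g. g \<in> min_gens I \<and> (\<exists>k. Poly_Mapping.keys g = {j, k} \<and> k \<notin> V)}" for V
  define pV where "pV V = (LEAST p. p \<in> pS V)" for V
  define sV where "sV V = (LEAST p. p \<in> sS V)" for V
  have exg: "\<exists>g z. g \<in> min_gens I \<and> Poly_Mapping.keys g = {x, z} \<and> z \<notin> V"
    if mc: "mincover I V" and xV: "x \<in> V" for V x
  proof -
    have "V - {x} \<noteq> V" using xV by blast
    then have "\<not> cover I (V - {x})" using mc unfolding mincover_def by blast
    then obtain g where g: "g \<in> min_gens I" "Poly_Mapping.keys g \<inter> (V - {x}) = {}" unfolding cover_def by blast
    have "Poly_Mapping.keys g \<inter> V \<noteq> {}" using mc g(1) unfolding mincover_def cover_def by blast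
    then have xg: "x \<in> Poly_Mapping.keys g" using g(2) by blast
    obtain x0 y0 where "x0 \<noteq> y0" "Poly_Mapping.keys g = {x0, y0}" using support2_keys[OF s2 g(1)] by blast
    then obtain z where z: "Poly_Mapping.keys g = {x, z}" "z \<noteq> x" using two_elem_other xg by metis
    then have "z \<notin> V" using g(2) by blast
    then show ?thesis using g(1) z(1) by blast
  qed
  have pVin: "pV V \<in> pS V" if hV: "mincover I V" "i \<in> V" for V
  proof -
    obtain g z where "g \<in> min_gens I" "Poly_Mapping.keys g = {i, z}" "z \<notin> V" using exg[OF hV] by blast
    then have "Poly_Mapping.lookup g i \<in> pS V" unfolding pS_def by blast
    then show ?thesis unfolding pV_def by (rule LeastI)
  qed
  have sVin: "sV V \<in> sS V" if hV: "mincover I V" "j \<in> V" for V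
  proof -
    obtain g z where "g \<in> min_gens I" "Poly_Mapping.keys g = {j, z}" "z \<notin> V" using exg[OF hV] by blast
    then have "Poly_Mapping.lookup g j \<in> sS V" unfolding sS_def by blast
    then show ?thesis unfolding sV_def by (rule LeastI)
  qed
  have pVle: "pV V \<le> Poly_Mapping.lookup g i" if "g \<in> min_gens I" "Poly_Mapping.keys g = {i, k}" "k \<notin> V" for V g k
  proof -
    have "Poly_Mapping.lookup g i \<in> pS V" unfolding pS_def using that by blast
    then show ?thesis unfolding pV_def by (rule Least_le)
  qed
  have sVle: "sV V \<le> Poly_Mapping.lookup g j" if "g \<in> min_gens I" "Poly_Mapping.keys g = {j, k}" "k \<notin> V" for V g k
  proof -
    have "Poly_Mapping.lookup g j \<in> sS V" unfolding sS_def using that by blast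
    then show ?thesis unfolding sV_def by (rule Least_le)
  qed
  have stair: "pV V \<le> Poly_Mapping.lookup m i \<or> sV V \<le> Poly_Mapping.lookup m j"
    if "mincover I V" "i \<in> V" "j \<in> V" "m \<in> G" for V m
    by (rule staircase[OF s2 md that(1) that(2) that(3) ij _ _ Gm[OF that(4)]])
       (auto intro: pVle sVle)
  define SV where "SV = {V. mincover I V \<and> i \<in> V \<and> j \<in> V \<and> a1 < pV V \<and> br < sV V}"
  have finSV: "finite SV" by simp
  define u where "u = max (2 * a1) (Max (insert 0 (pV ` SV)))"
  define T where "T = {V \<in> SV. u < 2 * pV V}"
  have finT: "finite T" by simp
  define v where "v = max (2 * br) (Max (insert 0 (sV ` T)))"
  define w where "w = Poly_Mapping.single i u + Poly_Mapping.single j v"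
  have lw: "Poly_Mapping.lookup w k = (if k = i then u else if k = j then v else 0)" for k
    unfolding w_def using ij by (auto simp: lookup_add lookup_single when_def)
  have uge: "pV V \<le> u" if "V \<in> SV" for V
  proof -
    have "pV V \<le> Max (insert 0 (pV ` SV))" using finSV that by (intro Max_ge) auto
    then show ?thesis unfolding u_def by simp
  qed
  have vge: "sV V \<le> v" if "V \<in> T" for V
  proof -
    have "sV V \<le> Max (insert 0 (sV ` T))" using finT that by (intro Max_ge) auto
    then show ?thesis unfolding v_def by simp
  qed
  have u2: "2 * a1 \<le> u" unfolding u_def by simp
  have v2: "2 * br \<le> v" unfolding v_def by simp
  have notin: "(mon w :: ('v,'a) mpoly) \<notin> ideal_pow I 2"
  proof
    assume "(mon w :: ('v,'a) mpoly) \<in> ideal_pow I 2"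
    then have "(mon w :: ('v,'a) mpoly) \<in> mset (M2 I)" using I2_sub[OF mi] pow2 by blast
    then obtain m where "m \<in> M2 I" "mdvd m w" unfolding mon_mset by blast
    then obtain g1 g2 where gg: "g1 \<in> min_gens I" "g2 \<in> min_gens I" "mdvd (g1 + g2) w" unfolding M2_def by blast
    have inG: "g \<in> G" if g: "g \<in> min_gens I" and gw: "\<And>k. Poly_Mapping.lookup g k \<le> Poly_Mapping.lookup w k" for g
    proof -
      obtain x0 y0 where xy: "x0 \<noteq> y0" "Poly_Mapping.keys g = {x0, y0}" using support2_keys[OF s2 g] by blast
      have "Poly_Mapping.keys g \<subseteq> {i, j}"
      proof
        fix z assume z: "z \<in> Poly_Mapping.keys g"
        show "z \<in> {i, j}"
        proof (rule ccontr)
          assume "z \<notin> {i, j}"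
          then have "Poly_Mapping.lookup w z = 0" by (simp add: lw)
          then show False using gw[of z] keys_pos[OF z] by simp
        qed
      qed
      then have "Poly_Mapping.keys g = {i, j}" using sub_two[OF xy(2) xy(1)] by blast
      then show ?thesis unfolding G_def using g by blast
    qed
    have le12: "Poly_Mapping.lookup g1 k + Poly_Mapping.lookup g2 k \<le> Poly_Mapping.lookup w k" for k
      using gg(3) unfolding mdvd_def by (simp add: lookup_add)
    have g1G: "g1 \<in> G" using inG[OF gg(1)] le12 by (metis add_leD1)
    have g2G: "g2 \<in> G" using inG[OF gg(2)] le12 by (metis add_leD2)
    have su: "Poly_Mapping.lookup g1 i + Poly_Mapping.lookup g2 i \<le> u" using le12[of i] by (simp add: lw)
    have sv: "Poly_Mapping.lookup g1 j + Poly_Mapping.lookup g2 j \<le> v" using le12[of j] ij by (simp add: lw)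
    show False
    proof (cases "Max (insert 0 (sV ` T)) \<le> 2 * br")
      case True
      then have vv: "v = 2 * br" unfolding v_def by simp
      have "Poly_Mapping.lookup g1 j \<ge> br" "Poly_Mapping.lookup g2 j \<ge> br" unfolding br_def using mrl g1G g2G by auto
      then have bj: "Poly_Mapping.lookup g1 j = br" "Poly_Mapping.lookup g2 j = br" using sv vv by linarith+
      have ai: "ar \<le> Poly_Mapping.lookup g i" if g: "g \<in> G" "Poly_Mapping.lookup g j = br" for g
      proof (rule ccontr)
        assume "\<not> ar \<le> Poly_Mapping.lookup g i"
        then have "g = mr" using eqG[OF g(1) mr] g(2) unfolding ar_def br_def by simp
        then show False using \<open>\<not> ar \<le> Poly_Mapping.lookup g i\<close> unfolding ar_def by simp
      qed
      have "2 * ar \<le> u" using ai[OF g1G bj(1)] ai[OF g2G bj(2)] su by linarith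
      moreover have "u < 2 * ar"
      proof -
        have "x < 2 * ar" if x: "x \<in> insert 0 (pV ` SV)" for x
        proof (cases "x = 0")
          case True then show ?thesis using ar1 by simp
        next
          case False
          then obtain V where V: "V \<in> SV" "x = pV V" using x by blast
          have Vp: "mincover I V" "i \<in> V" "j \<in> V" "br < sV V" using V(1) unfolding SV_def by blast+
          have "pV V \<le> ar" using stair[OF Vp(1-3) mr] Vp(4) unfolding ar_def br_def by linarith
          then show ?thesis using V(2) ar1 by linarith
        qed
        then have "Max (insert 0 (pV ` SV)) < 2 * ar" using finSV by (subst Max_less_iff) auto
        then show ?thesis unfolding u_def using a1ar by simp
      qed
      ultimately show False by simp
    next
      case False
      then have gtm: "2 * br < Max (insert 0 (sV ` T))" by (simp only: not_le)
      then have vv: "v = Max (insert 0 (sV ` T))" unfolding v_def by (simp only: max_def) simp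
      have "v \<in> insert 0 (sV ` T)" unfolding vv using finT by (intro Max_in) auto
      moreover have "v \<noteq> 0" using gtm vv by linarith
      ultimately obtain V2 where V2: "V2 \<in> T" "v = sV V2" by blast
      have V2S: "V2 \<in> SV" "u < 2 * pV V2" using V2(1) unfolding T_def by blast+
      have V2p: "mincover I V2" "i \<in> V2" "j \<in> V2" using V2S(1) unfolding SV_def by blast+
      have "Poly_Mapping.lookup g1 j < sV V2" using sv V2(2) Gpos[OF g2G] by linarith
      then have "pV V2 \<le> Poly_Mapping.lookup g1 i" using stair[OF V2p g1G] by linarith
      moreover have "Poly_Mapping.lookup g2 j < sV V2" using sv V2(2) Gpos[OF g1G] by linarith
      then have "pV V2 \<le> Poly_Mapping.lookup g2 i" using stair[OF V2p g2G] by linarith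
      ultimately show False using su V2S(2) by linarith
    qed
  qed
  have inS: "(mon w :: ('v,'a) mpoly) \<in> symbolic_power I 2"
    unfolding symbolic_power_def
  proof
    fix P :: "('v,'a) mpoly set" assume P: "P \<in> min_primes I"
    have Pp: "prime_ideal P" using P unfolding min_primes_def by blast
    define V where "V = {k. X k \<in> P}"
    have mc: "mincover I V" unfolding V_def by (rule minprime_mincover[OF mi P])
    have mem: "(mon w :: ('v,'a) mpoly) \<in> loc_contr (ideal_pow I 2) P"
      if g12: "g1 \<in> min_gens I" "g2 \<in> min_gens I" "mdvd (g1 + g2) (t + w)"
        and tV: "\<And>k. 0 < Poly_Mapping.lookup t k \<Longrightarrow> k \<notin> V" for t g1 g2
    proof -
      have nP: "(mon t :: ('v,'a) mpoly) \<notin> P"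
      proof (rule mon_notin_prime[OF Pp])
        fix k assume "0 < Poly_Mapping.lookup t k"
        then show "X k \<notin> P" using tV unfolding V_def by blast
      qed
      have "(mon (t + w) :: ('v,'a) mpoly) \<in> ideal_prod I I"
        by (rule mon_in_I2[OF mi min_gen_in[OF g12(1)] min_gen_in[OF g12(2)] g12(3)])
      then have "mon t * mon w \<in> ideal_pow I 2" unfolding pow2 by (simp add: mon_add)
      then show ?thesis unfolding loc_contr_def using nP by blast
    qed
    show "(mon w :: ('v,'a) mpoly) \<in> loc_contr (ideal_pow I 2) P"
    proof (cases "i \<in> V")
      case iF: False
      show ?thesis
      proof (rule mem[OF Gm(1)[OF mr] Gm(1)[OF mr]])
        show "mdvd (mr + mr) (Poly_Mapping.single i (2 * ar) + w)"
        proof (rule mdvdI)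
          fix k
          show "Poly_Mapping.lookup (mr + mr) k \<le> Poly_Mapping.lookup (Poly_Mapping.single i (2 * ar) + w) k"
          proof (cases "k = i \<or> k = j")
            case True
            then show ?thesis using v2 ij unfolding ar_def br_def by (auto simp: lookup_add lookup_single lw)
          next
            case False
            then show ?thesis using Gz[OF mr] by (auto simp: lookup_add)
          qed
        qed
        fix k assume "0 < Poly_Mapping.lookup (Poly_Mapping.single i (2 * ar)) k"
        then have "k = i" by (auto simp: lookup_single when_def split: if_splits)
        then show "k \<notin> V" using iF by simp
      qed
    next
      case iT: True
      show ?thesis
      proof (cases "j \<in> V")
        case jF: False
        show ?thesis
        proof (rule mem[OF Gm(1)[OF m1] Gm(1)[OF m1]])
          show "mdvd (m1 + m1) (Poly_Mapping.single j (2 * b1) + w)"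
          proof (rule mdvdI)
            fix k
            show "Poly_Mapping.lookup (m1 + m1) k \<le> Poly_Mapping.lookup (Poly_Mapping.single j (2 * b1) + w) k"
            proof (cases "k = i \<or> k = j")
              case True
              then show ?thesis using u2 ij unfolding a1_def b1_def by (auto simp: lookup_add lookup_single lw)
            next
              case False
              then show ?thesis using Gz[OF m1] by (auto simp: lookup_add)
            qed
          qed
          fix k assume "0 < Poly_Mapping.lookup (Poly_Mapping.single j (2 * b1)) k"
          then have "k = j" by (auto simp: lookup_single when_def split: if_splits)
          then show "k \<notin> V" using jF by simp
        qed
      next
        case jT: True
        obtain gp kp where gp: "gp \<in> min_gens I" "Poly_Mapping.keys gp = {i, kp}" "kp \<notin> V" "Poly_Mapping.lookup gp i = pV V"
          using pVin[OF mc iT] unfolding pS_def by force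
        obtain gs ls where gs: "gs \<in> min_gens I" "Poly_Mapping.keys gs = {j, ls}" "ls \<notin> V" "Poly_Mapping.lookup gs j = sV V"
          using sVin[OF mc jT] unfolding sS_def by force
        have kpij: "kp \<noteq> i" "kp \<noteq> j" "ls \<noteq> i" "ls \<noteq> j" using gp(3) gs(3) iT jT by auto
        obtain cp where cp: "cp = Poly_Mapping.lookup gp kp" by blast
        obtain cs where cs: "cs = Poly_Mapping.lookup gs ls" by blast
        define t where "t = Poly_Mapping.single kp (2 * cp) + Poly_Mapping.single ls (2 * cs)"
        have lt: "Poly_Mapping.lookup t k = (if k = kp then 2 * cp else 0) + (if k = ls then 2 * cs else 0)" for k
          unfolding t_def by (simp add: lookup_add lookup_single when_def eq_commute)
        have lgp: "Poly_Mapping.lookup gp k = (if k = i then pV V else if k = kp then cp else 0)" for k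
          using lookup_two[OF gp(2), of k] gp(4) cp by simp
        have lgs: "Poly_Mapping.lookup gs k = (if k = j then sV V else if k = ls then cs else 0)" for k
          using lookup_two[OF gs(2), of k] gs(4) cs by simp
        have tV: "k \<notin> V" if "0 < Poly_Mapping.lookup t k" for k
        proof -
          have "k = kp \<or> k = ls" using that unfolding lt by (auto split: if_splits)
          then show ?thesis using gp(3) gs(3) by blast
        qed
        have pp: ?thesis if pu: "2 * pV V \<le> u"
        proof (rule mem[OF gp(1) gp(1) _ tV])
          show "mdvd (gp + gp) (t + w)"
          proof (rule mdvdI)
            fix k
            show "Poly_Mapping.lookup (gp + gp) k \<le> Poly_Mapping.lookup (t + w) k"
              unfolding lookup_add lt lgp lw using pu kpij by auto
          qed
        qed
        have ss: ?thesis if sv: "2 * sV V \<le> v"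
        proof (rule mem[OF gs(1) gs(1) _ tV])
          show "mdvd (gs + gs) (t + w)"
          proof (rule mdvdI)
            fix k
            show "Poly_Mapping.lookup (gs + gs) k \<le> Poly_Mapping.lookup (t + w) k"
              unfolding lookup_add lt lgs lw using sv kpij ij by auto
          qed
        qed
        show ?thesis
        proof (cases "pV V \<le> a1")
          case True then show ?thesis using pp u2 by linarith
        next
          case pF: False
          show ?thesis
          proof (cases "sV V \<le> br")
            case True then show ?thesis using ss v2 by linarith
          next
            case sF: False
            have VS: "V \<in> SV" unfolding SV_def using mc iT jT pF sF by simp
            show ?thesis
            proof (cases "2 * pV V \<le> u")
              case True then show ?thesis using pp by blast
            next
              case False
              then have VT: "V \<in> T" unfolding T_def using VS by simp
              have pu: "pV V \<le> u" using uge[OF VS] .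
              have sv: "sV V \<le> v" using vge[OF VT] .
              show ?thesis
              proof (rule mem[OF gp(1) gs(1) _ tV])
                show "mdvd (gp + gs) (t + w)"
                proof (rule mdvdI)
                  fix k
                  show "Poly_Mapping.lookup (gp + gs) k \<le> Poly_Mapping.lookup (t + w) k"
                    unfolding lookup_add lt lgp lgs lw using pu sv kpij ij by auto
                qed
              qed
            qed
          qed
        qed
      qed
    qed
  qed
  show ?thesis using inS notin by blast
qed

end
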